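(* Let $N\ge 2$, $a\in\mathbb{R}$, $\alpha\in(0,1]$, and let $P\in\mathbb{R}^{N\times N}$ be a symmetric, doubly stochastic matrix with nonnegative entries whose eigenvalues satisfy $-1<\lambda_N(P)\le\dots\le\lambda_2(P)<\lambda_1(P)=1$. Let $x_{t+1}=ax_t+r_t$ and $y_{i,t}=x_t+w_{i,t}$ ($i=1,\dots,N$), where $x_0$ is an independent finite random variable, the innovations $r_t$ are zero mean, independent over time with variance $\sigma_r^2$, the observation noises $w_{i,t}$ are zero mean with variance $\sigma_w^2$, independent over time and across agents, and uncorrelated with the innovations. Define the estimates $$\hat{x}_{i,t+1}=a\Big(\sum_{j=1}^N p_{ij}\hat{x}_{j,t}+\alpha(y_{i,t}-\hat{x}_{i,t})\Big),\qquad \tilde{x}_{i,t+1}=a\Big(\sum_{j=1}^N p_{ij}\tilde{x}_{j,t}+\alpha\Big(\sum_{j=1}^N p_{ij}y_{j,t}-\tilde{x}_{i,t}\Big)\Big),$$ error vectors $\hat{\xi}_t=(\hat{x}_{i,t}-x_t)_{i=1}^N$, $\tilde{\xi}_t=(\tilde{x}_{i,t}-x_t)_{i=1}^N$, and $Q=a(P-\alpha I_N)$. Suppose the spectral radius satisfies $\rho(Q)<1$. Let $\hat{\Sigma}=\lim_{t\to\infty}\mathbb{E}[\hat{\xi}_t\hat{\xi}_t^{\mathsf T}]$, $\tilde{\Sigma}=\lim_{t\to\infty}\mathbb{E}[\tilde{\xi}_t\tilde{\xi}_t^{\mathsf T}]$, $\hat{\mathrm{MSD}}(P,\alpha)=\frac1N\mathrm{Tr}(\hat{\Sigma})$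 and $\tilde{\mathrm{MSD}}(P,\alpha)=\frac1N\mathrm{Tr}(\tilde{\Sigma})$. Then $$\hat{\mathrm{MSD}}(P,\alpha)=R_{MSD}(\alpha)+\frac1N\sum_{i=1}^N\frac{a^2\alpha^2\sigma_w^2}{1-a^2(\lambda_i(P)-\alpha)^2},\qquad \tilde{\mathrm{MSD}}(P,\alpha)=R_{MSD}(\alpha)+\frac1N\sum_{i=1}^N\frac{a^2\alpha^2\sigma_w^2\lambda_i^2(P)}{1-a^2(\lambda_i(P)-\alpha)^2},$$ where $R_{MSD}(\alpha)=\dfrac{\sigma_r^2}{1-a^2(1-\alpha)^2}$.
   Context: $\lambda_i(P)$ denote the eigenvalues of $P$; MSD stands for steady-state mean square deviation per agent. *)

theory Defs
  imports "HOL-Probability.Probability" "Jordan_Normal_Form.Spectral_Radius"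
begin

primrec state :: "real \<Rightarrow> ('w \<Rightarrow> real) \<Rightarrow> (nat \<Rightarrow> 'w \<Rightarrow> real) \<Rightarrow> nat \<Rightarrow> 'w \<Rightarrow> real" where
  "state a x0 r 0 = x0"
| "state a x0 r (Suc t) = (\<lambda>\<omega>. a * state a x0 r t \<omega> + r t \<omega>)"

definition obs :: "real \<Rightarrow> ('w \<Rightarrow> real) \<Rightarrow> (nat \<Rightarrow> 'w \<Rightarrow> real) \<Rightarrow> (nat \<Rightarrow> nat \<Rightarrow> 'w \<Rightarrow> real)
    \<Rightarrow> nat \<Rightarrow> nat \<Rightarrow> 'w \<Rightarrow> real" where
  "obs a x0 r w i t = (\<lambda>\<omega>. state a x0 r t \<omega> + w i t \<omega>)"

text \<open>First estimator (hat): agents indexed 0..N-1, initial estimates xh0 (deterministic).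
  Arguments: N, P, a, alpha, observation process y, initial estimates.\<close>
primrec est_hat :: "nat \<Rightarrow> real mat \<Rightarrow> real \<Rightarrow> real \<Rightarrow> (nat \<Rightarrow> nat \<Rightarrow> 'w \<Rightarrow> real)
    \<Rightarrow> (nat \<Rightarrow> real) \<Rightarrow> nat \<Rightarrow> nat \<Rightarrow> 'w \<Rightarrow> real" where
  "est_hat N P a \<alpha> y xh0 0 = (\<lambda>i \<omega>. xh0 i)"
| "est_hat N P a \<alpha> y xh0 (Suc t) = (\<lambda>i \<omega>.
     a * ((\<Sum>j<N. P $$ (i, j) * est_hat N P a \<alpha> y xh0 t j \<omega>)
          + \<alpha> * (y i t \<omega> - est_hat N P a \<alpha> y xh0 t i \<omega>)))"

primrec est_tilde :: "nat \<Rightarrow> real mat \<Rightarrow> real \<Rightarrow> real \<Rightarrow> (nat \<Rightarrow> nat \<Rightarrow> 'w \<Rightarrow> real)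
    \<Rightarrow> (nat \<Rightarrow> real) \<Rightarrow> nat \<Rightarrow> nat \<Rightarrow> 'w \<Rightarrow> real" where
  "est_tilde N P a \<alpha> y xt0 0 = (\<lambda>i \<omega>. xt0 i)"
| "est_tilde N P a \<alpha> y xt0 (Suc t) = (\<lambda>i \<omega>.
     a * ((\<Sum>j<N. P $$ (i, j) * est_tilde N P a \<alpha> y xt0 t j \<omega>)
          + \<alpha> * ((\<Sum>j<N. P $$ (i, j) * y j t \<omega>) - est_tilde N P a \<alpha> y xt0 t i \<omega>)))"

definition sym_doubly_stochastic :: "nat \<Rightarrow> real mat \<Rightarrow> bool" where
  "sym_doubly_stochastic N P \<longleftrightarrow> P \<in> carrier_mat N N \<and> transpose_mat P = P
     \<and> (\<forall>i<N. \<forall>j<N. P $$ (i, j) \<ge> 0)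
     \<and> (\<forall>i<N. (\<Sum>j<N. P $$ (i, j)) = 1)
     \<and> (\<forall>j<N. (\<Sum>i<N. P $$ (i, j)) = 1)"

text \<open>lam 0 \<ge> lam 1 \<ge> ... \<ge> lam (N-1) are the eigenvalues of P counted with multiplicity
  (lambda_{i+1}(P) in the paper is lam i here).\<close>
definition eigenvalues_desc :: "nat \<Rightarrow> real mat \<Rightarrow> (nat \<Rightarrow> real) \<Rightarrow> bool" where
  "eigenvalues_desc N P lam \<longleftrightarrow>
     char_poly P = (\<Prod>i<N. [:- lam i, 1:]) \<and> (\<forall>i j. i \<le> j \<longrightarrow> j < N \<longrightarrow> lam j \<le> lam i)"

end

theory Submission
  imports Defs
begin


definition trc :: "nat \<Rightarrow> real mat \<Rightarrow> real" where
  "trc n A = (\<Sum>i<n. A $$ (i,i))"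

lemma trc_comm:
  assumes "A \<in> carrier_mat n n" "B \<in> carrier_mat n n"
  shows "trc n (A * B) = trc n (B * A)"
proof -
  have "trc n (A * B) = (\<Sum>i<n. \<Sum>k<n. A $$ (i,k) * B $$ (k,i))"
    using assms by (simp add: trc_def scalar_prod_def lessThan_atLeast0)
  also have "\<dots> = (\<Sum>k<n. \<Sum>i<n. B $$ (k,i) * A $$ (i,k))"
    by (subst sum.swap) (simp add: mult.commute)
  also have "\<dots> = trc n (B * A)"
    using assms by (simp add: trc_def scalar_prod_def lessThan_atLeast0)
  finally show ?thesis .
qed

lemma trc_sim:
  assumes "S \<in> carrier_mat n n" "X \<in> carrier_mat n n" "T \<in> carrier_mat n n" "T * S = 1\<^sub>m n"
  shows "trc n (S * X * T) = trc n X"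
proof -
  have "trc n (S * X * T) = trc n (S * (X * T))" using assms by (simp add: assoc_mult_mat)
  also have "\<dots> = trc n ((X * T) * S)" using assms by (intro trc_comm) auto
  also have "\<dots> = trc n (X * (T * S))" using assms by (simp add: assoc_mult_mat)
  also have "\<dots> = trc n X" using assms by simp
  finally show ?thesis .
qed

lemma ut_mult:
  fixes A B :: "real mat"
  assumes A: "A \<in> carrier_mat n n" and B: "B \<in> carrier_mat n n"
    and uA: "upper_triangular A" and uB: "upper_triangular B"
  shows "upper_triangular (A * B)" "\<And>i. i < n \<Longrightarrow> (A * B) $$ (i,i) = A $$ (i,i) * B $$ (i,i)"
proof -
  show "upper_triangular (A * B)"
  proof
    fix i j assume ji: "j < i" and i: "i < dim_row (A * B)"
    hence i': "i < n" using A by simp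
    have "(A * B) $$ (i,j) = (\<Sum>k\<in>{0..<n}. A $$ (i,k) * B $$ (k,j))"
      using A B i' ji by (simp add: scalar_prod_def)
    also have "\<dots> = 0"
    proof (rule sum.neutral, clarify)
      fix k assume k: "k \<in> {0..<n}"
      show "A $$ (i,k) * B $$ (k,j) = 0"
      proof (cases "k < i")
        case True
        have "A $$ (i,k) = 0" using upper_triangularD[OF uA True] A i' by simp
        thus ?thesis by simp
      next
        case False
        have "B $$ (k,j) = 0" using upper_triangularD[OF uB] False B k ji by simp
        thus ?thesis by simp
      qed
    qed
    finally show "(A * B) $$ (i,j) = 0" .
  qed
  fix i assume i: "i < n"
  have "(A * B) $$ (i,i) = (\<Sum>k\<in>{0..<n}. A $$ (i,k) * B $$ (k,i))"
    using A B i by (simp add: scalar_prod_def)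
  also have "\<dots> = (\<Sum>k\<in>{0..<n}. if k = i then A $$ (i,i) * B $$ (i,i) else 0)"
  proof (rule sum.cong[OF refl])
    fix k assume k: "k \<in> {0..<n}"
    show "A $$ (i,k) * B $$ (k,i) = (if k = i then A $$ (i,i) * B $$ (i,i) else 0)"
    proof (cases "k < i")
      case True
      have "A $$ (i,k) = 0" using upper_triangularD[OF uA True] A i by simp
      thus ?thesis using True by simp
    next
      case False
      show ?thesis
      proof (cases "k = i")
        case False
        hence "i < k" using \<open>\<not> k < i\<close> by simp
        hence "B $$ (k,i) = 0" using upper_triangularD[OF uB] B k by simp
        thus ?thesis using False by simp
      qed simp
    qed
  qed
  also have "\<dots> = A $$ (i,i) * B $$ (i,i)" using i by simp
  finally show "(A * B) $$ (i,i) = A $$ (i,i) * B $$ (i,i)" .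
qed

lemma ut_pow:
  fixes A :: "real mat"
  assumes A: "A \<in> carrier_mat n n" and uA: "upper_triangular A"
  shows "upper_triangular (A ^\<^sub>m k) \<and> (\<forall>i<n. (A ^\<^sub>m k) $$ (i,i) = (A $$ (i,i)) ^ k)"
proof (induction k)
  case 0 thus ?case using A by auto
next
  case (Suc k)
  have c: "A ^\<^sub>m k \<in> carrier_mat n n" using A by simp
  show ?case using ut_mult[OF c A _ uA] Suc A by (auto simp: mult.commute)
qed


lemma prod_lessThan_list: "(\<Prod>i<(N::nat). f i) = prod_list (map f [0..<N])"
  by (simp add: prod.list_conv_set_nth atLeast0LessThan)

lemma sim_mult:
  fixes S T X Y :: "real mat"
  assumes "S \<in> carrier_mat n n" "X \<in> carrier_mat n n" "T \<in> carrier_mat n n" "Y \<in> carrier_mat n n"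
    "T * S = 1\<^sub>m n"
  shows "S * X * T * (S * Y * T) = S * (X * Y) * T"
proof -
  have "S * X * T * (S * Y * T) = S * X * (T * (S * Y * T))"
    using assms by (intro assoc_mult_mat) auto
  also have "T * (S * Y * T) = T * (S * (Y * T))"
    using assms by (simp add: assoc_mult_mat[of _ n n _ n _ n])
  also have "\<dots> = (T * S) * (Y * T)" by (rule assoc_mult_mat[symmetric]) (use assms in auto)
  also have "\<dots> = Y * T" using assms by simp
  also have "S * X * (Y * T) = S * (X * Y) * T"
    using assms by (simp add: assoc_mult_mat[of _ n n _ n _ n])
  finally show ?thesis .
qed

lemma spectral_facts:
  fixes P :: "real mat" and a \<alpha> :: real and lam :: "nat \<Rightarrow> real"
  assumes P: "P \<in> carrier_mat N N"
    and cp: "char_poly P = (\<Prod>i<N. [:- lam i, 1:])"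
    and sr: "spectral_radius (map_mat complex_of_real (a \<cdot>\<^sub>m (P - \<alpha> \<cdot>\<^sub>m 1\<^sub>m N))) < 1"
  shows "\<forall>i<N. \<bar>a * (lam i - \<alpha>)\<bar> < 1"
    "\<And>k. trc N ((a \<cdot>\<^sub>m (P - \<alpha> \<cdot>\<^sub>m 1\<^sub>m N)) ^\<^sub>m k * (a \<cdot>\<^sub>m (P - \<alpha> \<cdot>\<^sub>m 1\<^sub>m N)) ^\<^sub>m k)
        = (\<Sum>i<N. (a * (lam i - \<alpha>)) ^ (2*k))"
    "\<And>k. trc N ((a \<cdot>\<^sub>m (P - \<alpha> \<cdot>\<^sub>m 1\<^sub>m N)) ^\<^sub>m k * (a \<cdot>\<^sub>m (P - \<alpha> \<cdot>\<^sub>m 1\<^sub>m N)) ^\<^sub>m k * (P * P))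
        = (\<Sum>i<N. (a * (lam i - \<alpha>)) ^ (2*k) * (lam i)\<^sup>2)"
proof -
  define Q where "Q = a \<cdot>\<^sub>m (P - \<alpha> \<cdot>\<^sub>m 1\<^sub>m N)"
  define mu where "mu i = a * (lam i - \<alpha>)" for i
  have cp': "char_poly P = (\<Prod>e\<leftarrow>map lam [0..<N]. [:- e, 1:])"
    unfolding cp prod_lessThan_list by (simp add: o_def)
  obtain B S T where sch: "schur_decomposition P (map lam [0..<N]) = (B, S, T)"
    by (cases "schur_decomposition P (map lam [0..<N])") auto
  from schur_decomposition[OF P cp' sch]
  have wit: "similar_mat_wit P B S T" and uB: "upper_triangular B"
    and dB: "diag_mat B = map lam [0..<N]" by auto
  from similar_mat_witD2[OF P wit] have B: "B \<in> carrier_mat N N" and S: "S \<in> carrier_mat N N"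
    and T: "T \<in> carrier_mat N N" and ST: "S * T = 1\<^sub>m N" and TS: "T * S = 1\<^sub>m N"
    and PB: "P = S * B * T" by auto
  have Bdiag: "B $$ (i,i) = lam i" if "i < N" for i
  proof -
    have "diag_mat B ! i = lam i" using dB that by simp
    thus ?thesis using B that by (simp add: diag_mat_def)
  qed
  define Bq where "Bq = a \<cdot>\<^sub>m (B - \<alpha> \<cdot>\<^sub>m 1\<^sub>m N)"
  have Bq: "Bq \<in> carrier_mat N N" using B by (simp add: Bq_def minus_carrier_mat)
  have uBq: "upper_triangular Bq"
    using uB B by (auto simp: Bq_def upper_triangular_def)
  have Bqdiag: "Bq $$ (i,i) = mu i" if "i < N" for i
    using Bdiag[OF that] B that by (simp add: Bq_def mu_def)
  have QS: "Q = S * Bq * T"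
  proof -
    have BmC: "B - \<alpha> \<cdot>\<^sub>m 1\<^sub>m N \<in> carrier_mat N N" using B by (simp add: minus_carrier_mat)
    have "S * Bq * T = (a \<cdot>\<^sub>m (S * (B - \<alpha> \<cdot>\<^sub>m 1\<^sub>m N))) * T"
      by (simp only: Bq_def mult_smult_distrib[OF S BmC])
    also have "\<dots> = a \<cdot>\<^sub>m (S * (B - \<alpha> \<cdot>\<^sub>m 1\<^sub>m N) * T)"
      by (rule mult_smult_assoc_mat) (use S BmC T in auto)
    also have "S * (B - \<alpha> \<cdot>\<^sub>m 1\<^sub>m N) = S * B - S * (\<alpha> \<cdot>\<^sub>m 1\<^sub>m N)"
      by (rule mult_minus_distrib_mat[OF S B]) simp
    also have "S * (\<alpha> \<cdot>\<^sub>m 1\<^sub>m N) = \<alpha> \<cdot>\<^sub>m S"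
      using mult_smult_distrib[OF S, where B="1\<^sub>m N" and k=\<alpha> and nc=N] S by simp
    also have "(S * B - \<alpha> \<cdot>\<^sub>m S) * T = S * B * T - (\<alpha> \<cdot>\<^sub>m S) * T"
      by (rule minus_mult_distrib_mat) (use S B T in auto)
    also have "(\<alpha> \<cdot>\<^sub>m S) * T = \<alpha> \<cdot>\<^sub>m (S * T)" by (rule mult_smult_assoc_mat[OF S T])
    finally show ?thesis using ST PB by (simp add: Q_def)
  qed
  have Q: "Q \<in> carrier_mat N N" using P by (simp add: Q_def minus_carrier_mat)
  have wq: "similar_mat_wit Q Bq S T"
    by (rule similar_mat_witI[OF ST TS QS Q Bq S T])
  have Qk: "Q ^\<^sub>m k = S * Bq ^\<^sub>m k * T" for k by (rule similar_mat_wit_pow_id[OF wq])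
  have "char_poly Q = char_poly Bq"
    by (rule char_poly_similar) (use wq in \<open>auto simp: similar_mat_def\<close>)
  also have "\<dots> = (\<Prod>e\<leftarrow>diag_mat Bq. [:- e, 1:])" by (rule char_poly_upper_triangular[OF Bq uBq])
  finally have cpQ: "char_poly Q = (\<Prod>e\<leftarrow>diag_mat Bq. [:- e, 1:])" .
  show "\<forall>i<N. \<bar>a * (lam i - \<alpha>)\<bar> < 1"
  proof (intro allI impI)
    fix i assume i: "i < N"
    have "mu i \<in> set (diag_mat Bq)" using i Bq Bqdiag[OF i] by (force simp: diag_mat_def)
    hence "poly (char_poly Q) (mu i) = 0"
      unfolding cpQ by (subst poly_prod_list_zero_iff) (force simp: o_def)
    hence "poly (char_poly (map_mat complex_of_real Q)) (complex_of_real (mu i)) = 0"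
      unfolding of_real_hom.char_poly_hom[OF Q] of_real_hom.poly_map_poly by simp
    hence ev: "eigenvalue (map_mat complex_of_real Q) (complex_of_real (mu i))"
      using eigenvalue_root_char_poly[of "map_mat complex_of_real Q" N] Q by simp
    hence "norm (complex_of_real (mu i)) \<le> spectral_radius (map_mat complex_of_real Q)"
    proof -
      have "norm (complex_of_real (mu i)) \<in> cmod ` spectrum (map_mat complex_of_real Q)"
        unfolding spectrum_def by (rule imageI) (use ev in simp)
      thus ?thesis using spectral_radius_mem_max(2)[of "map_mat complex_of_real Q" N] Q i by auto
    qed
    moreover have "norm (complex_of_real (mu i)) = \<bar>mu i\<bar>" by (rule norm_of_real)
    ultimately show "\<bar>a * (lam i - \<alpha>)\<bar> < 1" using sr unfolding Q_def mu_def by linarith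
  qed
  fix k
  have BqkB: "Bq ^\<^sub>m k \<in> carrier_mat N N" using Bq by simp
  from ut_pow[OF Bq uBq, of k] have uBk: "upper_triangular (Bq ^\<^sub>m k)"
    and dBk: "\<And>i. i < N \<Longrightarrow> (Bq ^\<^sub>m k) $$ (i,i) = mu i ^ k" using Bqdiag by auto
  have X: "Bq ^\<^sub>m k * Bq ^\<^sub>m k \<in> carrier_mat N N" using BqkB by simp
  have uX: "upper_triangular (Bq ^\<^sub>m k * Bq ^\<^sub>m k)" by (rule ut_mult(1)[OF BqkB BqkB uBk uBk])
  have dX: "(Bq ^\<^sub>m k * Bq ^\<^sub>m k) $$ (i,i) = mu i ^ (2*k)" if "i < N" for i
    using ut_mult(2)[OF BqkB BqkB uBk uBk that] dBk[OF that] by (simp add: power_mult mult_2 power_add)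
  have QQ: "Q ^\<^sub>m k * Q ^\<^sub>m k = S * (Bq ^\<^sub>m k * Bq ^\<^sub>m k) * T"
    unfolding Qk by (rule sim_mult[OF S BqkB T BqkB TS])
  show "trc N ((a \<cdot>\<^sub>m (P - \<alpha> \<cdot>\<^sub>m 1\<^sub>m N)) ^\<^sub>m k * (a \<cdot>\<^sub>m (P - \<alpha> \<cdot>\<^sub>m 1\<^sub>m N)) ^\<^sub>m k)
        = (\<Sum>i<N. (a * (lam i - \<alpha>)) ^ (2*k))"
    unfolding Q_def[symmetric] QQ trc_sim[OF S X T TS]
    by (simp add: trc_def dX mu_def)
  have BB: "B * B \<in> carrier_mat N N" using B by simp
  have PP: "P * P = S * (B * B) * T" unfolding PB by (rule sim_mult[OF S B T B TS])
  have Y: "Bq ^\<^sub>m k * Bq ^\<^sub>m k * (B * B) \<in> carrier_mat N N" using X BB by simp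
  have uBB: "upper_triangular (B * B)" by (rule ut_mult(1)[OF B B uB uB])
  have dY: "(Bq ^\<^sub>m k * Bq ^\<^sub>m k * (B * B)) $$ (i,i) = mu i ^ (2*k) * (lam i)\<^sup>2" if "i < N" for i
    using ut_mult(2)[OF X BB uX uBB that] ut_mult(2)[OF B B uB uB that] dX[OF that] Bdiag[OF that]
    by (simp add: power2_eq_square)
  have "Q ^\<^sub>m k * Q ^\<^sub>m k * (P * P) = S * (Bq ^\<^sub>m k * Bq ^\<^sub>m k * (B * B)) * T"
    unfolding QQ PP by (rule sim_mult[OF S X T BB TS])
  thus "trc N ((a \<cdot>\<^sub>m (P - \<alpha> \<cdot>\<^sub>m 1\<^sub>m N)) ^\<^sub>m k * (a \<cdot>\<^sub>m (P - \<alpha> \<cdot>\<^sub>m 1\<^sub>m N)) ^\<^sub>m k * (P * P))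
        = (\<Sum>i<N. (a * (lam i - \<alpha>)) ^ (2*k) * (lam i)\<^sup>2)"
    unfolding Q_def[symmetric] using trc_sim[OF S Y T TS]
    by (simp add: trc_def dY mu_def)
qed



lemma mult_car: "A \<in> carrier_mat N N \<Longrightarrow> B \<in> carrier_mat N N \<Longrightarrow> A * B \<in> carrier_mat N N"
  by (rule mult_carrier_mat)

lemma assoc3: "A \<in> carrier_mat N N \<Longrightarrow> B \<in> carrier_mat N N \<Longrightarrow> C \<in> carrier_mat N N \<Longrightarrow> A * B * C = A * (B * C)"
  by (rule assoc_mult_mat)

lemma pow_comm:
  fixes Q :: "real mat"
  assumes Q: "Q \<in> carrier_mat N N"
  shows "Q * Q ^\<^sub>m k = Q ^\<^sub>m k * Q"
proof (induction k)
  case 0 thus ?case using Q by simp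
next
  case (Suc k)
  have "Q * Q ^\<^sub>m Suc k = (Q * Q ^\<^sub>m k) * Q"
    using Q by (simp add: assoc_mult_mat[of _ N N _ N _ N])
  also have "\<dots> = Q ^\<^sub>m Suc k * Q" using Suc by simp
  finally show ?case .
qed

lemma entry3:
  fixes A X :: "real mat"
  assumes A: "A \<in> carrier_mat N N" and X: "X \<in> carrier_mat N N" and i: "i < N" and j: "j < N"
  shows "(A * X * A) $$ (i,j) = (\<Sum>a<N. \<Sum>b<N. A $$ (i,a) * X $$ (a,b) * A $$ (b,j))"
proof -
  have "(A * X * A) $$ (i,j) = (A * (X * A)) $$ (i,j)" using A X by (simp add: assoc3)
  also have "\<dots> = (\<Sum>a<N. A $$ (i,a) * (\<Sum>b<N. X $$ (a,b) * A $$ (b,j)))"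
    using A X i j by (simp add: scalar_prod_def lessThan_atLeast0)
  also have "\<dots> = (\<Sum>a<N. \<Sum>b<N. A $$ (i,a) * X $$ (a,b) * A $$ (b,j))"
    by (simp add: sum_distrib_left mult.assoc)
  finally show ?thesis .
qed

lemma pow_sym:
  fixes Q :: "real mat"
  assumes Q: "Q \<in> carrier_mat N N" and sym: "\<And>i j. i < N \<Longrightarrow> j < N \<Longrightarrow> Q $$ (i,j) = Q $$ (j,i)"
  shows "i < N \<Longrightarrow> j < N \<Longrightarrow> (Q ^\<^sub>m k) $$ (i,j) = (Q ^\<^sub>m k) $$ (j,i)"
proof (induction k arbitrary: i j)
  case 0 thus ?case using Q by auto
next
  case (Suc k)
  have "(Q ^\<^sub>m Suc k) $$ (i,j) = (\<Sum>l<N. (Q ^\<^sub>m k) $$ (i,l) * Q $$ (l,j))"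
    using Q Suc.prems by (simp add: scalar_prod_def lessThan_atLeast0)
  also have "\<dots> = (\<Sum>l<N. Q $$ (j,l) * (Q ^\<^sub>m k) $$ (l,i))"
    using Suc.IH[of _ i] sym Suc.prems by (intro sum.cong) (auto simp: mult.commute)
  also have "\<dots> = (Q * Q ^\<^sub>m k) $$ (j,i)"
    using Q Suc.prems by (simp add: scalar_prod_def lessThan_atLeast0)
  also have "\<dots> = (Q ^\<^sub>m Suc k) $$ (j,i)" using pow_comm[OF Q] by simp
  finally show ?case .
qed

lemma QXQ:
  fixes Q X :: "real mat"
  assumes Q: "Q \<in> carrier_mat N N" and X: "X \<in> carrier_mat N N"
  shows "Q * (Q ^\<^sub>m k * X * Q ^\<^sub>m k) * Q = Q ^\<^sub>m Suc k * X * Q ^\<^sub>m Suc k"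
proof -
  have Qk: "Q ^\<^sub>m k \<in> carrier_mat N N" using Q by simp
  have "Q ^\<^sub>m Suc k * X * Q ^\<^sub>m Suc k = (Q * Q ^\<^sub>m k) * X * (Q ^\<^sub>m k * Q)"
    using pow_comm[OF Q] by simp
  also have "(Q * Q ^\<^sub>m k) * X = Q * (Q ^\<^sub>m k * X)" by (rule assoc3[OF Q Qk X])
  also have "Q * (Q ^\<^sub>m k * X) * (Q ^\<^sub>m k * Q) = Q * ((Q ^\<^sub>m k * X) * (Q ^\<^sub>m k * Q))"
    by (rule assoc3) (use Q Qk X in \<open>auto intro: mult_car\<close>)
  also have "(Q ^\<^sub>m k * X) * (Q ^\<^sub>m k * Q) = (Q ^\<^sub>m k * X * Q ^\<^sub>m k) * Q"
    by (rule assoc3[symmetric]) (use Q Qk X in \<open>auto intro: mult_car\<close>)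
  also have "Q * ((Q ^\<^sub>m k * X * Q ^\<^sub>m k) * Q) = Q * (Q ^\<^sub>m k * X * Q ^\<^sub>m k) * Q"
    by (rule assoc3[symmetric]) (use Q Qk X in \<open>auto intro: mult_car\<close>)
  finally show ?thesis by simp
qed

lemma entry_bound:
  fixes Q X :: "real mat"
  assumes Q: "Q \<in> carrier_mat N N" and X: "X \<in> carrier_mat N N" and i: "i < N" and j: "j < N"
    and bd: "\<And>i j. i < N \<Longrightarrow> j < N \<Longrightarrow> \<bar>(Q ^\<^sub>m k) $$ (i,j)\<bar> \<le> K * m ^ k"
    and Km: "0 \<le> K * m ^ k"
  shows "\<bar>(Q ^\<^sub>m k * X * Q ^\<^sub>m k) $$ (i,j)\<bar> \<le> (\<Sum>a<N. \<Sum>b<N. \<bar>X $$ (a,b)\<bar>) * (K * m ^ k)\<^sup>2"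
proof -
  have Qk: "Q ^\<^sub>m k \<in> carrier_mat N N" using Q by simp
  have "\<bar>(Q ^\<^sub>m k * X * Q ^\<^sub>m k) $$ (i,j)\<bar>
      = \<bar>\<Sum>a<N. \<Sum>b<N. (Q ^\<^sub>m k) $$ (i,a) * X $$ (a,b) * (Q ^\<^sub>m k) $$ (b,j)\<bar>"
    by (simp add: entry3[OF Qk X i j])
  also have "\<dots> \<le> (\<Sum>a<N. \<Sum>b<N. \<bar>(Q ^\<^sub>m k) $$ (i,a) * X $$ (a,b) * (Q ^\<^sub>m k) $$ (b,j)\<bar>)"
    by (rule order.trans[OF sum_abs sum_mono]) (rule sum_abs)
  also have "\<dots> \<le> (\<Sum>a<N. \<Sum>b<N. \<bar>X $$ (a,b)\<bar> * (K * m ^ k)\<^sup>2)"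
  proof (intro sum_mono)
    fix a b assume a: "a \<in> {..<N}" and b: "b \<in> {..<N}"
    have "\<bar>(Q ^\<^sub>m k) $$ (i,a) * X $$ (a,b) * (Q ^\<^sub>m k) $$ (b,j)\<bar>
        = \<bar>X $$ (a,b)\<bar> * (\<bar>(Q ^\<^sub>m k) $$ (i,a)\<bar> * \<bar>(Q ^\<^sub>m k) $$ (b,j)\<bar>)"
      by (simp add: abs_mult)
    also have "\<dots> \<le> \<bar>X $$ (a,b)\<bar> * ((K * m ^ k) * (K * m ^ k))"
      using a b i j bd Km by (intro mult_left_mono mult_mono) auto
    finally show "\<bar>(Q ^\<^sub>m k) $$ (i,a) * X $$ (a,b) * (Q ^\<^sub>m k) $$ (b,j)\<bar>
        \<le> \<bar>X $$ (a,b)\<bar> * (K * m ^ k)\<^sup>2" by (simp add: power2_eq_square)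
  qed
  also have "\<dots> = (\<Sum>a<N. \<Sum>b<N. \<bar>X $$ (a,b)\<bar>) * (K * m ^ k)\<^sup>2"
    by (simp add: sum_distrib_right)
  finally show ?thesis .
qed

lemma cov_limit:
  fixes Q D :: "real mat" and C :: "nat \<Rightarrow> nat \<Rightarrow> nat \<Rightarrow> real"
  assumes Q: "Q \<in> carrier_mat N N" and D: "D \<in> carrier_mat N N"
    and bd: "\<And>k i j. i < N \<Longrightarrow> j < N \<Longrightarrow> \<bar>(Q ^\<^sub>m k) $$ (i,j)\<bar> \<le> K * m ^ k"
    and m0: "0 \<le> m" and m1: "m < 1" and K0: "0 \<le> K"
    and rec: "\<And>t i j. i < N \<Longrightarrow> j < N \<Longrightarrow>
       C (Suc t) i j = (\<Sum>a<N. \<Sum>b<N. Q $$ (i,a) * C t a b * Q $$ (b,j)) + D $$ (i,j)"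
    and i: "i < N" and j: "j < N"
  shows "summable (\<lambda>k. (Q ^\<^sub>m k * D * Q ^\<^sub>m k) $$ (i,j))"
    "(\<lambda>t. C t i j) \<longlonglongrightarrow> (\<Sum>k. (Q ^\<^sub>m k * D * Q ^\<^sub>m k) $$ (i,j))"
proof -
  define C0 where "C0 = mat N N (\<lambda>(a,b). C 0 a b)"
  have C0: "C0 \<in> carrier_mat N N" by (simp add: C0_def)
  define G where "G k = Q ^\<^sub>m k * D * Q ^\<^sub>m k" for k
  have G: "G k \<in> carrier_mat N N" for k using Q D by (simp add: G_def mult_car)
  have closed: "C t i j = (Q ^\<^sub>m t * C0 * Q ^\<^sub>m t) $$ (i,j) + (\<Sum>k<t. G k $$ (i,j))"
    if "i < N" "j < N" for t i j
    using that
  proof (induction t arbitrary: i j)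
    case 0 thus ?case using Q by (simp add: C0_def)
  next
    case (Suc t)
    define X where "X = Q ^\<^sub>m t * C0 * Q ^\<^sub>m t"
    have X: "X \<in> carrier_mat N N" using Q C0 by (simp add: X_def mult_car)
    have "C (Suc t) i j = (\<Sum>a<N. \<Sum>b<N. Q $$ (i,a) * (X $$ (a,b) + (\<Sum>k<t. G k $$ (a,b))) * Q $$ (b,j)) + D $$ (i,j)"
      using rec[OF Suc.prems] Suc.IH by (simp add: X_def)
    also have "(\<Sum>a<N. \<Sum>b<N. Q $$ (i,a) * (X $$ (a,b) + (\<Sum>k<t. G k $$ (a,b))) * Q $$ (b,j))
       = (\<Sum>a<N. \<Sum>b<N. Q $$ (i,a) * X $$ (a,b) * Q $$ (b,j))
         + (\<Sum>k<t. \<Sum>a<N. \<Sum>b<N. Q $$ (i,a) * G k $$ (a,b) * Q $$ (b,j))"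
    proof -
      have "(\<Sum>a<N. \<Sum>b<N. Q $$ (i,a) * (X $$ (a,b) + (\<Sum>k<t. G k $$ (a,b))) * Q $$ (b,j))
         = (\<Sum>a<N. \<Sum>b<N. Q $$ (i,a) * X $$ (a,b) * Q $$ (b,j))
           + (\<Sum>a<N. \<Sum>b<N. \<Sum>k<t. Q $$ (i,a) * G k $$ (a,b) * Q $$ (b,j))"
        by (simp add: algebra_simps sum.distrib sum_distrib_left sum_distrib_right)
      also have "(\<Sum>a<N. \<Sum>b<N. \<Sum>k<t. Q $$ (i,a) * G k $$ (a,b) * Q $$ (b,j))
          = (\<Sum>a<N. \<Sum>k<t. \<Sum>b<N. Q $$ (i,a) * G k $$ (a,b) * Q $$ (b,j))"
        by (intro sum.cong refl sum.swap)
      also have "\<dots> = (\<Sum>k<t. \<Sum>a<N. \<Sum>b<N. Q $$ (i,a) * G k $$ (a,b) * Q $$ (b,j))"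
        by (rule sum.swap)
      finally show ?thesis .
    qed
    also have "(\<Sum>a<N. \<Sum>b<N. Q $$ (i,a) * X $$ (a,b) * Q $$ (b,j)) = (Q * X * Q) $$ (i,j)"
      by (rule entry3[OF Q X Suc.prems, symmetric])
    also have "Q * X * Q = Q ^\<^sub>m Suc t * C0 * Q ^\<^sub>m Suc t"
      unfolding X_def by (rule QXQ[OF Q C0])
    also have "(\<Sum>k<t. \<Sum>a<N. \<Sum>b<N. Q $$ (i,a) * G k $$ (a,b) * Q $$ (b,j)) = (\<Sum>k<t. G (Suc k) $$ (i,j))"
    proof (rule sum.cong[OF refl])
      fix k
      show "(\<Sum>a<N. \<Sum>b<N. Q $$ (i,a) * G k $$ (a,b) * Q $$ (b,j)) = G (Suc k) $$ (i,j)"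
        using entry3[OF Q G Suc.prems, of k] QXQ[OF Q D, of k] by (simp add: G_def)
    qed
    also have "D $$ (i,j) = G 0 $$ (i,j)" using Q D Suc.prems by (simp add: G_def)
    finally show ?case by (simp add: sum.lessThan_Suc_shift del: sum.lessThan_Suc)
  qed
  define c where "c X = (\<Sum>a<N. \<Sum>b<N. \<bar>X $$ (a,b)\<bar>) * K\<^sup>2" for X :: "real mat"
  have bdX: "\<bar>(Q ^\<^sub>m k * X * Q ^\<^sub>m k) $$ (i,j)\<bar> \<le> c X * (m\<^sup>2) ^ k" if X: "X \<in> carrier_mat N N" for X k
    using entry_bound[OF Q X i j, of k K m] bd K0 m0
    by (simp add: c_def power_mult_distrib power_mult[symmetric] mult.commute mult.left_commute)
  have m2: "m\<^sup>2 < 1" using m0 m1 by (simp add: power_less_one_iff abs_square_less_1)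
  have geo: "summable (\<lambda>k. c D * (m\<^sup>2) ^ k)"
    by (rule summable_mult) (rule summable_geometric, use m0 m2 in simp)
  show sm: "summable (\<lambda>k. (Q ^\<^sub>m k * D * Q ^\<^sub>m k) $$ (i,j))"
    by (rule summable_comparison_test[OF _ geo]) (use bdX[OF D] in auto)
  have z: "(\<lambda>t. (Q ^\<^sub>m t * C0 * Q ^\<^sub>m t) $$ (i,j)) \<longlonglongrightarrow> 0"
  proof (rule Lim_null_comparison)
    show "\<forall>\<^sub>F t in sequentially. norm ((Q ^\<^sub>m t * C0 * Q ^\<^sub>m t) $$ (i,j)) \<le> c C0 * (m\<^sup>2) ^ t"
      using bdX[OF C0] by simp
    show "(\<lambda>t. c C0 * (m\<^sup>2) ^ t) \<longlonglongrightarrow> 0"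
      by (rule tendsto_mult_right_zero) (rule LIMSEQ_power_zero, use m0 m2 in simp)
  qed
  have "(\<lambda>t. (Q ^\<^sub>m t * C0 * Q ^\<^sub>m t) $$ (i,j) + (\<Sum>k<t. G k $$ (i,j)))
        \<longlonglongrightarrow> 0 + (\<Sum>k. G k $$ (i,j))"
    by (rule tendsto_add[OF z summable_LIMSEQ]) (use sm in \<open>simp add: G_def\<close>)
  thus "(\<lambda>t. C t i j) \<longlonglongrightarrow> (\<Sum>k. (Q ^\<^sub>m k * D * Q ^\<^sub>m k) $$ (i,j))"
    using closed[OF i j] by (simp add: G_def)
qed



locale model = prob_space M for M :: "'w measure" +
  fixes N :: nat and x0 :: "'w \<Rightarrow> real" and r :: "nat \<Rightarrow> 'w \<Rightarrow> real"
    and w :: "nat \<Rightarrow> nat \<Rightarrow> 'w \<Rightarrow> real" and sr sw :: real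
  assumes x0m: "x0 \<in> borel_measurable M" and x0sq: "integrable M (\<lambda>\<omega>. (x0 \<omega>)\<^sup>2)"
    and x0r: "\<And>t. expectation (\<lambda>\<omega>. x0 \<omega> * r t \<omega>) = 0"
    and x0w: "\<And>j t. j < N \<Longrightarrow> expectation (\<lambda>\<omega>. x0 \<omega> * w j t \<omega>) = 0"
    and rm: "\<And>t. r t \<in> borel_measurable M" and rsq: "\<And>t. integrable M (\<lambda>\<omega>. (r t \<omega>)\<^sup>2)"
    and rE: "\<And>t. expectation (r t) = 0"
    and rr: "\<And>t. expectation (\<lambda>\<omega>. (r t \<omega>)\<^sup>2) = sr\<^sup>2"
    and rind: "\<And>s t. s \<noteq> t \<Longrightarrow> expectation (\<lambda>\<omega>. r s \<omega> * r t \<omega>) = 0"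
    and wm: "\<And>i t. i < N \<Longrightarrow> w i t \<in> borel_measurable M"
    and wsq: "\<And>i t. i < N \<Longrightarrow> integrable M (\<lambda>\<omega>. (w i t \<omega>)\<^sup>2)"
    and wE: "\<And>i t. i < N \<Longrightarrow> expectation (w i t) = 0"
    and ww: "\<And>i t. i < N \<Longrightarrow> expectation (\<lambda>\<omega>. (w i t \<omega>)\<^sup>2) = sw\<^sup>2"
    and wind: "\<And>i j s t. i < N \<Longrightarrow> j < N \<Longrightarrow> (i, s) \<noteq> (j, t) \<Longrightarrow>
                 expectation (\<lambda>\<omega>. w i s \<omega> * w j t \<omega>) = 0"
    and wr: "\<And>i t s. i < N \<Longrightarrow> expectation (\<lambda>\<omega>. w i t \<omega> * r s \<omega>) = 0"
begin

definition sq :: "('w \<Rightarrow> real) \<Rightarrow> bool" where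
  "sq f \<longleftrightarrow> f \<in> borel_measurable M \<and> integrable M (\<lambda>x. (f x)\<^sup>2)"

definition ip :: "('w \<Rightarrow> real) \<Rightarrow> ('w \<Rightarrow> real) \<Rightarrow> real" where
  "ip f g = expectation (\<lambda>x. f x * g x)"

lemma sq_prod_int: assumes "sq f" "sq g" shows "integrable M (\<lambda>x. f x * g x)"
proof (rule Bochner_Integration.integrable_bound)
  show "integrable M (\<lambda>x. (f x)\<^sup>2 + (g x)\<^sup>2)" using assms by (auto simp: sq_def)
  show "(\<lambda>x. f x * g x) \<in> borel_measurable M" using assms by (auto simp: sq_def)
  show "AE x in M. norm (f x * g x) \<le> norm ((f x)\<^sup>2 + (g x)\<^sup>2)"
  proof (rule AE_I2)
    fix x
    have "2 * \<bar>f x * g x\<bar> \<le> (f x)\<^sup>2 + (g x)\<^sup>2"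
      using sum_squares_bound[of "\<bar>f x\<bar>" "\<bar>g x\<bar>"] by (simp add: abs_mult)
    moreover have "0 \<le> (f x)\<^sup>2 + (g x)\<^sup>2" by simp
    ultimately show "norm (f x * g x) \<le> norm ((f x)\<^sup>2 + (g x)\<^sup>2)" by simp
  qed
qed

lemma sq_const: "sq (\<lambda>x. c)" by (simp add: sq_def)

lemma sq_add: assumes "sq f" "sq g" shows "sq (\<lambda>x. f x + g x)"
proof -
  have "integrable M (\<lambda>x. (f x)\<^sup>2 + 2 * (f x * g x) + (g x)\<^sup>2)"
    using assms sq_prod_int[OF assms] by (auto simp: sq_def)
  moreover have "(\<lambda>x. (f x)\<^sup>2 + 2 * (f x * g x) + (g x)\<^sup>2) = (\<lambda>x. (f x + g x)\<^sup>2)"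
    by (rule ext) (simp add: power2_sum)
  moreover have "(\<lambda>x. f x + g x) \<in> borel_measurable M"
  proof -
    have [measurable]: "f \<in> borel_measurable M" "g \<in> borel_measurable M" using assms by (auto simp: sq_def)
    show ?thesis by measurable
  qed
  ultimately show ?thesis by (simp add: sq_def)
qed

lemma sq_scale: assumes "sq f" shows "sq (\<lambda>x. c * f x)"
proof -
  have [measurable]: "f \<in> borel_measurable M" using assms by (auto simp: sq_def)
  have "(\<lambda>x. c * f x) \<in> borel_measurable M" by measurable
  thus ?thesis using assms by (simp add: sq_def power_mult_distrib)
qed

lemma sq_neg: assumes "sq f" shows "sq (\<lambda>x. - f x)"
  using sq_scale[OF assms, of "-1"] by simp

lemma sq_diff: assumes "sq f" "sq g" shows "sq (\<lambda>x. f x - g x)"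
  using sq_add[OF assms(1) sq_neg[OF assms(2)]] by simp

lemma sq_sum: assumes "\<And>i. i \<in> A \<Longrightarrow> sq (f i)" shows "sq (\<lambda>x. \<Sum>i\<in>A. f i x)"
  using assms
proof (induction A rule: infinite_finite_induct)
  case (infinite A) thus ?case by (simp add: sq_const)
next
  case empty thus ?case by (simp add: sq_const)
next
  case (insert a A) thus ?case by (simp add: sq_add)
qed

lemma ip_comm: "ip f g = ip g f" by (simp add: ip_def mult.commute)

lemma ip_add: assumes "sq f" "sq g" "sq h" shows "ip (\<lambda>x. f x + g x) h = ip f h + ip g h"
  using sq_prod_int[OF assms(1,3)] sq_prod_int[OF assms(2,3)]
  by (simp add: ip_def distrib_right)

lemma ip_diff: assumes "sq f" "sq g" "sq h" shows "ip (\<lambda>x. f x - g x) h = ip f h - ip g h"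
  using sq_prod_int[OF assms(1,3)] sq_prod_int[OF assms(2,3)]
  by (simp add: ip_def left_diff_distrib)

lemma ip_scale: "ip (\<lambda>x. c * f x) h = c * ip f h"
  by (simp add: ip_def mult.assoc)

lemma ip_sum: assumes "\<And>i. i \<in> A \<Longrightarrow> sq (f i)" "sq h"
  shows "ip (\<lambda>x. \<Sum>i\<in>A. f i x) h = (\<Sum>i\<in>A. ip (f i) h)"
proof -
  have "ip (\<lambda>x. \<Sum>i\<in>A. f i x) h = expectation (\<lambda>x. \<Sum>i\<in>A. f i x * h x)"
    by (simp add: ip_def sum_distrib_right)
  also have "\<dots> = (\<Sum>i\<in>A. expectation (\<lambda>x. f i x * h x))"
    by (rule Bochner_Integration.integral_sum) (use assms sq_prod_int in auto)
  finally show ?thesis by (simp add: ip_def)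
qed

lemma sq_x0: "sq x0" using x0m x0sq by (simp add: sq_def)
lemma sq_r: "sq (r t)" using rm rsq by (simp add: sq_def)
lemma sq_w: "i < N \<Longrightarrow> sq (w i t)" using wm wsq by (simp add: sq_def)

definition good :: "nat \<Rightarrow> ('w \<Rightarrow> real) \<Rightarrow> bool" where
  "good t f \<longleftrightarrow> sq f \<and> (\<forall>t'\<ge>t. ip f (r t') = 0 \<and> (\<forall>j<N. ip f (w j t') = 0))"

lemma good_sq: "good t f \<Longrightarrow> sq f" by (simp add: good_def)

lemma good_mono: "good t f \<Longrightarrow> t \<le> s \<Longrightarrow> good s f" by (auto simp: good_def)

lemma good_const: "good t (\<lambda>x. c)"
proof -
  have "ip (\<lambda>x. c) (r t') = 0" for t'
    using ip_scale[of c "\<lambda>x. 1" "r t'"] rE by (simp add: ip_def)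
  moreover have "ip (\<lambda>x. c) (w j t') = 0" if "j < N" for j t'
    using ip_scale[of c "\<lambda>x. 1" "w j t'"] wE[OF that] by (simp add: ip_def)
  ultimately show ?thesis by (simp add: good_def sq_const)
qed

lemma good_x0: "good t x0"
  using x0r x0w sq_x0 by (simp add: good_def ip_def)

lemma good_add: "good t f \<Longrightarrow> good t g \<Longrightarrow> good t (\<lambda>x. f x + g x)"
  unfolding good_def using sq_add ip_add sq_r sq_w by simp

lemma good_diff: "good t f \<Longrightarrow> good t g \<Longrightarrow> good t (\<lambda>x. f x - g x)"
  unfolding good_def using sq_diff ip_diff sq_r sq_w by simp

lemma good_scale: "good t f \<Longrightarrow> good t (\<lambda>x. c * f x)"
  unfolding good_def using sq_scale ip_scale by simp

lemma good_sum: assumes "\<And>i. i \<in> A \<Longrightarrow> good t (f i)" shows "good t (\<lambda>x. \<Sum>i\<in>A. f i x)"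
  using assms
proof (induction A rule: infinite_finite_induct)
  case (infinite A) thus ?case by (simp add: good_const)
next
  case empty thus ?case by (simp add: good_const)
next
  case (insert a A) thus ?case by (simp add: good_add)
qed

lemma good_r: "good (Suc t) (r t)"
  unfolding good_def ip_def using sq_r rind wr by (auto simp: mult.commute)

lemma good_w: "i < N \<Longrightarrow> good (Suc t) (w i t)"
  unfolding good_def ip_def using sq_w wr wind by auto

lemma ip_add_r: assumes "sq f" "sq g" "sq h" shows "ip h (\<lambda>x. f x + g x) = ip h f + ip h g"
  using ip_add[OF assms] by (simp add: ip_comm)
lemma ip_diff_r: assumes "sq f" "sq g" "sq h" shows "ip h (\<lambda>x. f x - g x) = ip h f - ip h g"
  using ip_diff[OF assms] by (simp add: ip_comm)
lemma ip_scale_r: "ip h (\<lambda>x. c * f x) = c * ip h f"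
  using ip_scale[of c f h] by (simp add: ip_comm)
lemma ip_sum_r: assumes "\<And>i. i \<in> A \<Longrightarrow> sq (f i)" "sq h"
  shows "ip h (\<lambda>x. \<Sum>i\<in>A. f i x) = (\<Sum>i\<in>A. ip h (f i))"
  using ip_sum[OF assms] by (simp add: ip_comm)

lemma ip3:
  assumes "sq f1" "sq f2" "sq f3" "sq g1" "sq g2" "sq g3"
  shows "ip (\<lambda>x. f1 x + b * f2 x - f3 x) (\<lambda>x. g1 x + c * g2 x - g3 x)
     = (ip f1 g1 + c * ip f1 g2 - ip f1 g3) + b * (ip f2 g1 + c * ip f2 g2 - ip f2 g3)
       - (ip f3 g1 + c * ip f3 g2 - ip f3 g3)"
proof -
  have sqg: "sq (\<lambda>x. g1 x + c * g2 x - g3 x)" using assms by (intro sq_diff sq_add sq_scale)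
  have sqf12: "sq (\<lambda>x. f1 x + b * f2 x)" using assms by (intro sq_add sq_scale)
  have sqg12: "sq (\<lambda>x. g1 x + c * g2 x)" using assms by (intro sq_add sq_scale)
  have e: "ip h (\<lambda>x. g1 x + c * g2 x - g3 x) = ip h g1 + c * ip h g2 - ip h g3" if h: "sq h" for h
    using ip_diff_r[OF sqg12 assms(6) h] ip_add_r[OF assms(4) sq_scale[OF assms(5)] h] ip_scale_r
    by simp
  have "ip (\<lambda>x. f1 x + b * f2 x - f3 x) (\<lambda>x. g1 x + c * g2 x - g3 x)
      = ip f1 (\<lambda>x. g1 x + c * g2 x - g3 x) + b * ip f2 (\<lambda>x. g1 x + c * g2 x - g3 x)
        - ip f3 (\<lambda>x. g1 x + c * g2 x - g3 x)"
    using ip_diff[OF sqf12 assms(3) sqg] ip_add[OF assms(1) sq_scale[OF assms(2)] sqg] ip_scale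
    by simp
  thus ?thesis using e assms by simp
qed

lemma cov_step:
  fixes Q K :: "real mat" and \<beta> :: real and e :: "nat \<Rightarrow> nat \<Rightarrow> 'w \<Rightarrow> real"
  assumes e0: "\<And>i. i < N \<Longrightarrow> good 0 (e 0 i)"
    and es: "\<And>t i. i < N \<Longrightarrow> e (Suc t) i = (\<lambda>\<omega>. (\<Sum>j<N. Q $$ (i,j) * e t j \<omega>)
               + \<beta> * (\<Sum>l<N. K $$ (i,l) * w l t \<omega>) - r t \<omega>)"
  shows "\<And>t i. i < N \<Longrightarrow> good t (e t i)"
    and "\<And>t i j. i < N \<Longrightarrow> j < N \<Longrightarrow> ip (e (Suc t) i) (e (Suc t) j)
        = (\<Sum>a<N. \<Sum>b<N. Q $$ (i,a) * ip (e t a) (e t b) * Q $$ (j,b))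
          + \<beta>\<^sup>2 * sw\<^sup>2 * (\<Sum>l<N. K $$ (i,l) * K $$ (j,l)) + sr\<^sup>2"
proof -
  show g: "good t (e t i)" if "i < N" for t i
    using that
  proof (induction t arbitrary: i)
    case 0 thus ?case by (rule e0)
  next
    case (Suc t)
    have "good (Suc t) (\<lambda>\<omega>. (\<Sum>j<N. Q $$ (i,j) * e t j \<omega>)
               + \<beta> * (\<Sum>l<N. K $$ (i,l) * w l t \<omega>) - r t \<omega>)"
      using Suc.IH
      by (intro good_diff good_add good_scale good_sum good_r good_w good_mono[of t _ "Suc t"]) auto
    thus ?case using es[OF Suc.prems] by simp
  qed
  fix t i j assume i: "i < N" and j: "j < N"
  define A where "A i = (\<lambda>\<omega>. \<Sum>j<N. Q $$ (i,j) * e t j \<omega>)" for i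
  define n where "n i = (\<lambda>\<omega>. \<Sum>l<N. K $$ (i,l) * w l t \<omega>)" for i
  have gA: "good t (A i)" if "i < N" for i
    unfolding A_def using g by (intro good_sum good_scale) auto
  have sqA: "sq (A i)" if "i < N" for i using gA[OF that] by (rule good_sq)
  have sqe: "sq (e t i)" if "i < N" for i using g[OF that] by (rule good_sq)
  have sqn: "sq (n i)" for i unfolding n_def by (rule sq_sum) (intro sq_scale sq_w, simp)
  have sqr: "sq (r t)" by (rule sq_r)
  have Ar: "ip (A i) (r t) = 0" if "i < N" for i using gA[OF that] by (simp add: good_def)
  have Aw: "ip (A i) (w l t) = 0" if "i < N" "l < N" for i l using gA[OF that(1)] that(2) by (simp add: good_def)
  have An: "ip (A i) (n j) = 0" if "i < N" for i j
  proof -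
    have "ip (A i) (n j) = (\<Sum>l<N. ip (A i) (\<lambda>\<omega>. K $$ (j,l) * w l t \<omega>))"
      unfolding n_def by (rule ip_sum_r) (auto intro: sq_scale sq_w sqA that)
    also have "\<dots> = 0" using Aw[OF that] by (simp add: ip_scale_r)
    finally show ?thesis .
  qed
  have nr: "ip (n i) (r t) = 0" for i
  proof -
    have "ip (n i) (r t) = (\<Sum>l<N. ip (\<lambda>\<omega>. K $$ (i,l) * w l t \<omega>) (r t))"
      unfolding n_def by (rule ip_sum) (auto intro: sq_scale sq_w sqr)
    also have "\<dots> = 0" using wr by (simp add: ip_scale ip_def)
    finally show ?thesis .
  qed
  have nn: "ip (n i) (n j) = sw\<^sup>2 * (\<Sum>l<N. K $$ (i,l) * K $$ (j,l))" for i j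
  proof -
    have "ip (n i) (n j) = (\<Sum>l<N. K $$ (i,l) * ip (w l t) (n j))"
      unfolding n_def[of i] by (subst ip_sum) (auto intro: sq_scale sq_w sqn simp: ip_scale)
    also have "\<dots> = (\<Sum>l<N. K $$ (i,l) * (\<Sum>l'<N. K $$ (j,l') * ip (w l t) (w l' t)))"
    proof (rule sum.cong[OF refl])
      fix l assume l: "l \<in> {..<N}"
      show "K $$ (i,l) * ip (w l t) (n j) = K $$ (i,l) * (\<Sum>l'<N. K $$ (j,l') * ip (w l t) (w l' t))"
        unfolding n_def[of j] using l by (subst ip_sum_r) (auto intro: sq_scale sq_w simp: ip_scale_r)
    qed
    also have "\<dots> = (\<Sum>l<N. K $$ (i,l) * (K $$ (j,l) * sw\<^sup>2))"
    proof (rule sum.cong[OF refl])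
      fix l assume l: "l \<in> {..<N}"
      have "(\<Sum>l'<N. K $$ (j,l') * ip (w l t) (w l' t)) = (\<Sum>l'<N. if l' = l then K $$ (j,l) * sw\<^sup>2 else 0)"
        using l ww wind by (intro sum.cong refl) (auto simp: ip_def power2_eq_square)
      also have "\<dots> = K $$ (j,l) * sw\<^sup>2" using l by simp
      finally show "K $$ (i,l) * (\<Sum>l'<N. K $$ (j,l') * ip (w l t) (w l' t)) = K $$ (i,l) * (K $$ (j,l) * sw\<^sup>2)"
        by simp
    qed
    also have "\<dots> = sw\<^sup>2 * (\<Sum>l<N. K $$ (i,l) * K $$ (j,l))"
      unfolding sum_distrib_left by (rule sum.cong[OF refl]) (simp only: mult_ac)
    finally show ?thesis .
  qed
  have AA: "ip (A i) (A j) = (\<Sum>a<N. \<Sum>b<N. Q $$ (i,a) * ip (e t a) (e t b) * Q $$ (j,b))"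
  proof -
    have "ip (A i) (A j) = (\<Sum>a<N. Q $$ (i,a) * ip (e t a) (A j))"
      unfolding A_def[of i] by (subst ip_sum) (auto intro: sq_scale sqe sqA j simp: ip_scale)
    also have "\<dots> = (\<Sum>a<N. Q $$ (i,a) * (\<Sum>b<N. Q $$ (j,b) * ip (e t a) (e t b)))"
      unfolding A_def[of j] by (intro sum.cong refl, subst ip_sum_r) (auto intro: sq_scale sqe simp: ip_scale_r)
    also have "\<dots> = (\<Sum>a<N. \<Sum>b<N. Q $$ (i,a) * ip (e t a) (e t b) * Q $$ (j,b))"
      unfolding sum_distrib_left by (intro sum.cong refl) (simp only: mult_ac)
    finally show ?thesis .
  qed
  have rr': "ip (r t) (r t) = sr\<^sup>2" using rr by (simp add: ip_def power2_eq_square)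
  have "ip (e (Suc t) i) (e (Suc t) j) = ip (\<lambda>x. A i x + \<beta> * n i x - r t x) (\<lambda>x. A j x + \<beta> * n j x - r t x)"
    using es[OF i] es[OF j] by (simp add: A_def n_def)
  also have "\<dots> = (ip (A i) (A j) + \<beta> * ip (A i) (n j) - ip (A i) (r t))
       + \<beta> * (ip (n i) (A j) + \<beta> * ip (n i) (n j) - ip (n i) (r t))
       - (ip (r t) (A j) + \<beta> * ip (r t) (n j) - ip (r t) (r t))"
    by (rule ip3) (use sqA sqn sqr i j in auto)
  also have "\<dots> = ip (A i) (A j) + \<beta>\<^sup>2 * ip (n i) (n j) + sr\<^sup>2"
    using An[OF i] An[OF j] Ar[OF i] Ar[OF j] nr rr' by (simp add: ip_comm[of "n i" "A j"] ip_comm[of "r t" "A j"] ip_comm[of "r t" "n j"] power2_eq_square)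
  finally show "ip (e (Suc t) i) (e (Suc t) j)
        = (\<Sum>a<N. \<Sum>b<N. Q $$ (i,a) * ip (e t a) (e t b) * Q $$ (j,b))
          + \<beta>\<^sup>2 * sw\<^sup>2 * (\<Sum>l<N. K $$ (i,l) * K $$ (j,l)) + sr\<^sup>2"
    using AA nn by (simp add: mult.assoc)
qed

end



lemma sq_integrable:
  fixes f :: "'a \<Rightarrow> real"
  assumes "prob_space M" "f \<in> borel_measurable M" "integrable M (\<lambda>x. (f x)\<^sup>2)"
  shows "integrable M f"
proof -
  interpret prob_space M by fact
  have b: "\<bar>f x\<bar> \<le> (f x)\<^sup>2 + 1" for x
  proof (cases "\<bar>f x\<bar> \<le> 1")
    case True thus ?thesis by (simp add: add_increasing)
  next
    case False
    hence "\<bar>f x\<bar> * 1 \<le> \<bar>f x\<bar> * \<bar>f x\<bar>" by (intro mult_left_mono) auto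
    thus ?thesis by (simp add: power2_eq_square abs_mult[symmetric])
  qed
  show ?thesis
  proof (rule Bochner_Integration.integrable_bound[of M "\<lambda>x. (f x)\<^sup>2 + 1"])
    show "integrable M (\<lambda>x. (f x)\<^sup>2 + 1)" using assms by simp
    show "f \<in> borel_measurable M" by fact
    show "AE x in M. norm (f x) \<le> norm ((f x)\<^sup>2 + 1)"
      by (rule AE_I2) (use b in simp)
  qed
qed

lemma indep_pair_from_vars:
  fixes X :: "'i \<Rightarrow> 'a \<Rightarrow> real"
  assumes "prob_space M" "prob_space.indep_vars M (\<lambda>_. borel) X I" "i \<in> I" "j \<in> I" "i \<noteq> j"
  shows "prob_space.indep_var M borel (X i) borel (X j)"
proof -
  interpret prob_space M by fact
  have "indep_vars (\<lambda>_. borel) X (insert i {j})"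
    by (rule indep_vars_subset[OF assms(2)]) (use assms in auto)
  from indep_vars_sum[OF _ _ this] assms(5)
  have "indep_var borel (X i) borel (\<lambda>\<omega>. \<Sum>k\<in>{j}. X k \<omega>)" by simp
  thus ?thesis by simp
qed



lemma rowsum_pow:
  fixes Q :: "real mat"
  assumes Q: "Q \<in> carrier_mat N N" and rs: "\<And>i. i < N \<Longrightarrow> (\<Sum>j<N. Q $$ (i,j)) = \<rho>"
  shows "i < N \<Longrightarrow> (\<Sum>j<N. (Q ^\<^sub>m k) $$ (i,j)) = \<rho> ^ k"
proof (induction k arbitrary: i)
  case 0
  have "(\<Sum>j<N. (1\<^sub>m N :: real mat) $$ (i,j)) = (\<Sum>j<N. if j = i then 1 else 0)"
    using 0 by (intro sum.cong) auto
  thus ?case using 0 Q by simp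
next
  case (Suc k)
  have "(\<Sum>j<N. (Q ^\<^sub>m Suc k) $$ (i,j)) = (\<Sum>j<N. \<Sum>l<N. (Q ^\<^sub>m k) $$ (i,l) * Q $$ (l,j))"
    using Q Suc.prems by (intro sum.cong) (auto simp: scalar_prod_def lessThan_atLeast0)
  also have "\<dots> = (\<Sum>l<N. (Q ^\<^sub>m k) $$ (i,l) * (\<Sum>j<N. Q $$ (l,j)))"
    by (subst sum.swap) (simp add: sum_distrib_left)
  also have "\<dots> = (\<Sum>l<N. (Q ^\<^sub>m k) $$ (i,l) * \<rho>)" using rs by simp
  also have "\<dots> = \<rho> ^ Suc k" using Suc.IH[OF Suc.prems] by (simp add: sum_distrib_right[symmetric])
  finally show ?case .
qed

lemma generic:
  fixes M :: "'w measure" and P K Mz :: "real mat" and e :: "nat \<Rightarrow> nat \<Rightarrow> 'w \<Rightarrow> real"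
    and g lam cinit :: "nat \<Rightarrow> real"
  assumes mdl: "model M N x0 r w sr sw"
    and N0: "0 < N"
    and P: "P \<in> carrier_mat N N"
    and Psym: "\<And>i j. i < N \<Longrightarrow> j < N \<Longrightarrow> P $$ (i,j) = P $$ (j,i)"
    and Prow: "\<And>i. i < N \<Longrightarrow> (\<Sum>j<N. P $$ (i,j)) = 1"
    and cp: "char_poly P = (\<Prod>i<N. [:- lam i, 1:])"
    and lam0: "lam 0 = 1"
    and srh: "spectral_radius (map_mat complex_of_real (a \<cdot>\<^sub>m (P - \<alpha> \<cdot>\<^sub>m 1\<^sub>m N))) < 1"
    and Mz: "Mz \<in> carrier_mat N N"
    and KK: "\<And>i j. i < N \<Longrightarrow> j < N \<Longrightarrow> (\<Sum>l<N. K $$ (i,l) * K $$ (j,l)) = Mz $$ (i,j)"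
    and trM: "\<And>k. trc N ((a \<cdot>\<^sub>m (P - \<alpha> \<cdot>\<^sub>m 1\<^sub>m N)) ^\<^sub>m k * (a \<cdot>\<^sub>m (P - \<alpha> \<cdot>\<^sub>m 1\<^sub>m N)) ^\<^sub>m k * Mz)
                = (\<Sum>i<N. (a * (lam i - \<alpha>)) ^ (2*k) * g i)"
    and e0: "\<And>i. i < N \<Longrightarrow> e 0 i = (\<lambda>\<omega>. cinit i - x0 \<omega>)"
    and es: "\<And>t i. i < N \<Longrightarrow> e (Suc t) i = (\<lambda>\<omega>. (\<Sum>j<N. (a \<cdot>\<^sub>m (P - \<alpha> \<cdot>\<^sub>m 1\<^sub>m N)) $$ (i,j) * e t j \<omega>)
               + (a * \<alpha>) * (\<Sum>l<N. K $$ (i,l) * w l t \<omega>) - r t \<omega>)"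
  shows "\<exists>\<Sigma> :: nat \<Rightarrow> nat \<Rightarrow> real.
           (\<forall>i<N. \<forall>j<N. (\<lambda>t. prob_space.expectation M (\<lambda>\<omega>. e t i \<omega> * e t j \<omega>)) \<longlonglongrightarrow> \<Sigma> i j)
         \<and> (\<Sum>i<N. \<Sigma> i i) / real N
             = sr\<^sup>2 / (1 - a\<^sup>2 * (1 - \<alpha>)\<^sup>2)
               + (\<Sum>i<N. a\<^sup>2 * \<alpha>\<^sup>2 * sw\<^sup>2 * g i / (1 - a\<^sup>2 * (lam i - \<alpha>)\<^sup>2)) / real N"
proof -
  interpret model M N x0 r w sr sw by (rule mdl)
  define Q where "Q = a \<cdot>\<^sub>m (P - \<alpha> \<cdot>\<^sub>m 1\<^sub>m N)"
  define mu where "mu i = a * (lam i - \<alpha>)" for i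
  define \<rho> where "\<rho> = a * (1 - \<alpha>)"
  have Q: "Q \<in> carrier_mat N N" using P by (simp add: Q_def minus_carrier_mat)
  have Qe: "Q $$ (i,j) = a * (P $$ (i,j) - (if i = j then \<alpha> else 0))" if "i < N" "j < N" for i j
    using that P by (simp add: Q_def)
  have Qsym: "Q $$ (i,j) = Q $$ (j,i)" if "i < N" "j < N" for i j
    using Qe that Psym by auto
  have Qrow: "(\<Sum>j<N. Q $$ (i,j)) = \<rho>" if i: "i < N" for i
  proof -
    have "(\<Sum>j<N. Q $$ (i,j)) = (\<Sum>j<N. a * P $$ (i,j) - (if j = i then a * \<alpha> else 0))"
    proof (rule sum.cong[OF refl])
      fix j assume "j \<in> {..<N}"
      thus "Q $$ (i,j) = a * P $$ (i,j) - (if j = i then a * \<alpha> else 0)"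
        using Qe[OF i, of j] by (auto simp: algebra_simps)
    qed
    also have "\<dots> = a * 1 - a * \<alpha>" using i Prow[OF i] by (simp add: sum_subtractf sum_distrib_left[symmetric])
    finally show ?thesis by (simp add: \<rho>_def algebra_simps)
  qed
  note sf = spectral_facts[OF P cp srh, folded Q_def]
  have mu1: "\<bar>mu i\<bar> < 1" if "i < N" for i using sf(1) that by (simp add: mu_def)
  have rho_mu: "\<rho> = mu 0" by (simp add: \<rho>_def mu_def lam0)
  have rho1: "\<bar>\<rho>\<bar> < 1" using mu1[OF N0] rho_mu by simp
  define m where "m = Max ((\<lambda>i. \<bar>mu i\<bar>) ` {..<N})"
  have mfin: "finite ((\<lambda>i. \<bar>mu i\<bar>) ` {..<N})" "(\<lambda>i. \<bar>mu i\<bar>) ` {..<N} \<noteq> {}" using N0 by auto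
  have mge: "\<bar>mu i\<bar> \<le> m" if "i < N" for i unfolding m_def using that mfin by (intro Max_ge) auto
  have m0: "0 \<le> m" using mge[OF N0] by simp
  have m1: "m < 1" unfolding m_def using mfin mu1 by (subst Max_less_iff) auto
  have bd: "\<bar>(Q ^\<^sub>m k) $$ (i,j)\<bar> \<le> sqrt (real N) * m ^ k" if ij: "i < N" "j < N" for k i j
  proof -
    have Qk: "Q ^\<^sub>m k \<in> carrier_mat N N" using Q by simp
    have "((Q ^\<^sub>m k) $$ (i,j))\<^sup>2 \<le> (\<Sum>b<N. ((Q ^\<^sub>m k) $$ (i,b))\<^sup>2)"
      using ij by (intro member_le_sum) auto
    also have "\<dots> \<le> (\<Sum>a<N. \<Sum>b<N. ((Q ^\<^sub>m k) $$ (a,b))\<^sup>2)"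
      using ij by (intro member_le_sum[of i "{..<N}" "\<lambda>a. \<Sum>b<N. ((Q ^\<^sub>m k) $$ (a,b))\<^sup>2"]) (auto intro: sum_nonneg)
    also have "\<dots> = trc N (Q ^\<^sub>m k * Q ^\<^sub>m k)"
      unfolding trc_def
    proof (rule sum.cong[OF refl])
      fix a assume a: "a \<in> {..<N}"
      have "(Q ^\<^sub>m k * Q ^\<^sub>m k) $$ (a,a) = (\<Sum>b<N. (Q ^\<^sub>m k) $$ (a,b) * (Q ^\<^sub>m k) $$ (b,a))"
        using Q a by (simp add: scalar_prod_def lessThan_atLeast0)
      also have "\<dots> = (\<Sum>b<N. ((Q ^\<^sub>m k) $$ (a,b))\<^sup>2)"
        using a pow_sym[OF Q Qsym] by (intro sum.cong refl) (auto simp: power2_eq_square)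
      finally show "(\<Sum>b<N. ((Q ^\<^sub>m k) $$ (a,b))\<^sup>2) = (Q ^\<^sub>m k * Q ^\<^sub>m k) $$ (a,a)" by simp
    qed
    also have "\<dots> = (\<Sum>i<N. (mu i) ^ (2*k))" using sf(2) by (simp add: mu_def)
    also have "\<dots> \<le> (\<Sum>i<N. m ^ (2*k))"
    proof (rule sum_mono)
      fix i assume "i \<in> {..<N}"
      hence "\<bar>mu i\<bar> ^ (2*k) \<le> m ^ (2*k)" using mge by (intro power_mono) auto
      thus "mu i ^ (2*k) \<le> m ^ (2*k)" by (simp add: power_mult power_even_abs)
    qed
    also have "\<dots> = (sqrt (real N) * m ^ k)\<^sup>2" by (simp add: power_mult_distrib power_mult[symmetric] mult.commute)
    finally have "((Q ^\<^sub>m k) $$ (i,j))\<^sup>2 \<le> (sqrt (real N) * m ^ k)\<^sup>2" .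
    hence "\<bar>(Q ^\<^sub>m k) $$ (i,j)\<bar>\<^sup>2 \<le> (sqrt (real N) * m ^ k)\<^sup>2" by simp
    thus ?thesis by (rule power2_le_imp_le) (use m0 in simp)
  qed
  have g0: "good 0 (e 0 i)" if "i < N" for i
    unfolding e0[OF that] by (intro good_diff good_const good_x0)
  have es': "e (Suc t) i = (\<lambda>\<omega>. (\<Sum>j<N. Q $$ (i,j) * e t j \<omega>)
               + (a * \<alpha>) * (\<Sum>l<N. K $$ (i,l) * w l t \<omega>) - r t \<omega>)" if "i < N" for t i
    using es[OF that] by (simp add: Q_def)
  have cs2: "ip (e (Suc t) i) (e (Suc t) j)
        = (\<Sum>a<N. \<Sum>b<N. Q $$ (i,a) * ip (e t a) (e t b) * Q $$ (j,b))
          + (a * \<alpha>)\<^sup>2 * sw\<^sup>2 * (\<Sum>l<N. K $$ (i,l) * K $$ (j,l)) + sr\<^sup>2"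
    if ij: "i < N" "j < N" for t i j
    by (rule cov_step(2)[where e=e and Q=Q and K=K and \<beta>="a * \<alpha>"]) (use g0 es' ij in auto)
  define C where "C t i j = ip (e t i) (e t j)" for t i j
  define D where "D = mat N N (\<lambda>(i,j). (a * \<alpha>)\<^sup>2 * sw\<^sup>2 * Mz $$ (i,j) + sr\<^sup>2)"
  have D: "D \<in> carrier_mat N N" by (simp add: D_def)
  have rec: "C (Suc t) i j = (\<Sum>a<N. \<Sum>b<N. Q $$ (i,a) * C t a b * Q $$ (b,j)) + D $$ (i,j)"
    if ij: "i < N" "j < N" for t i j
  proof -
    have "C (Suc t) i j = (\<Sum>a<N. \<Sum>b<N. Q $$ (i,a) * C t a b * Q $$ (j,b))
          + (a * \<alpha>)\<^sup>2 * sw\<^sup>2 * (\<Sum>l<N. K $$ (i,l) * K $$ (j,l)) + sr\<^sup>2"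
      unfolding C_def by (rule cs2[OF ij])
    also have "(\<Sum>a<N. \<Sum>b<N. Q $$ (i,a) * C t a b * Q $$ (j,b)) = (\<Sum>a<N. \<Sum>b<N. Q $$ (i,a) * C t a b * Q $$ (b,j))"
      using Qsym ij by (intro sum.cong refl) auto
    finally show ?thesis using ij KK[OF ij] by (simp add: D_def add.assoc)
  qed
  have K0: "0 \<le> sqrt (real N)" by simp
  have cl1: "summable (\<lambda>k. (Q ^\<^sub>m k * D * Q ^\<^sub>m k) $$ (i,j))" if "i < N" "j < N" for i j
    by (rule cov_limit(1)[where C=C and K="sqrt (real N)" and m=m and Q=Q and D=D])
      (use Q D bd m0 m1 K0 rec that in auto)
  have cl2: "(\<lambda>t. C t i j) \<longlonglongrightarrow> (\<Sum>k. (Q ^\<^sub>m k * D * Q ^\<^sub>m k) $$ (i,j))" if "i < N" "j < N" for i j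
    by (rule cov_limit(2)[where C=C and K="sqrt (real N)" and m=m and Q=Q and D=D])
      (use Q D bd m0 m1 K0 rec that in auto)
  define S where "S i j = (\<Sum>k. (Q ^\<^sub>m k * D * Q ^\<^sub>m k) $$ (i,j))" for i j
  have lim: "\<forall>i<N. \<forall>j<N. (\<lambda>t. prob_space.expectation M (\<lambda>\<omega>. e t i \<omega> * e t j \<omega>)) \<longlonglongrightarrow> S i j"
  proof (intro allI impI)
    fix i j assume ij: "i < N" "j < N"
    show "(\<lambda>t. prob_space.expectation M (\<lambda>\<omega>. e t i \<omega> * e t j \<omega>)) \<longlonglongrightarrow> S i j"
      using cl2[OF ij] by (simp add: S_def C_def ip_def)
  qed
  define \<beta> where "\<beta> = (a * \<alpha>)\<^sup>2 * sw\<^sup>2"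
  have trk: "(\<Sum>i<N. (Q ^\<^sub>m k * D * Q ^\<^sub>m k) $$ (i,i))
       = \<beta> * (\<Sum>i<N. (mu i)\<^sup>2 ^ k * g i) + sr\<^sup>2 * real N * (\<rho>\<^sup>2) ^ k" for k
  proof -
    have Qk: "Q ^\<^sub>m k \<in> carrier_mat N N" using Q by simp
    have "(\<Sum>i<N. (Q ^\<^sub>m k * D * Q ^\<^sub>m k) $$ (i,i))
        = (\<Sum>i<N. \<Sum>a<N. \<Sum>b<N. (Q ^\<^sub>m k) $$ (i,a) * D $$ (a,b) * (Q ^\<^sub>m k) $$ (b,i))"
      by (intro sum.cong refl entry3[OF Qk D]) auto
    also have "\<dots> = (\<Sum>i<N. \<Sum>a<N. \<Sum>b<N. \<beta> * ((Q ^\<^sub>m k) $$ (i,a) * Mz $$ (a,b) * (Q ^\<^sub>m k) $$ (b,i))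
                     + sr\<^sup>2 * ((Q ^\<^sub>m k) $$ (i,a) * (Q ^\<^sub>m k) $$ (b,i)))"
      by (intro sum.cong refl) (auto simp: D_def \<beta>_def algebra_simps)
    also have "\<dots> = \<beta> * (\<Sum>i<N. \<Sum>a<N. \<Sum>b<N. (Q ^\<^sub>m k) $$ (i,a) * Mz $$ (a,b) * (Q ^\<^sub>m k) $$ (b,i))
                    + sr\<^sup>2 * (\<Sum>i<N. \<Sum>a<N. \<Sum>b<N. (Q ^\<^sub>m k) $$ (i,a) * (Q ^\<^sub>m k) $$ (b,i))"
      by (simp add: sum.distrib sum_distrib_left)
    also have "(\<Sum>i<N. \<Sum>a<N. \<Sum>b<N. (Q ^\<^sub>m k) $$ (i,a) * Mz $$ (a,b) * (Q ^\<^sub>m k) $$ (b,i))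
             = trc N (Q ^\<^sub>m k * Mz * Q ^\<^sub>m k)"
      unfolding trc_def by (intro sum.cong refl entry3[OF Qk Mz, symmetric]) auto
    also have "trc N (Q ^\<^sub>m k * Mz * Q ^\<^sub>m k) = trc N (Q ^\<^sub>m k * (Q ^\<^sub>m k * Mz))"
      by (rule trc_comm) (use Qk Mz in \<open>auto intro: mult_car\<close>)
    also have "Q ^\<^sub>m k * (Q ^\<^sub>m k * Mz) = Q ^\<^sub>m k * Q ^\<^sub>m k * Mz"
      by (rule assoc3[symmetric, OF Qk Qk Mz])
    also have "trc N (Q ^\<^sub>m k * Q ^\<^sub>m k * Mz) = (\<Sum>i<N. (mu i)\<^sup>2 ^ k * g i)"
      using trM[of k] by (simp add: Q_def mu_def power_mult)
    also have "(\<Sum>i<N. \<Sum>a<N. \<Sum>b<N. (Q ^\<^sub>m k) $$ (i,a) * (Q ^\<^sub>m k) $$ (b,i))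
             = (\<Sum>i<N. (\<Sum>a<N. (Q ^\<^sub>m k) $$ (i,a)) * (\<Sum>b<N. (Q ^\<^sub>m k) $$ (i,b)))"
    proof (rule sum.cong[OF refl])
      fix i assume i: "i \<in> {..<N}"
      have "(\<Sum>a<N. \<Sum>b<N. (Q ^\<^sub>m k) $$ (i,a) * (Q ^\<^sub>m k) $$ (b,i))
          = (\<Sum>a<N. \<Sum>b<N. (Q ^\<^sub>m k) $$ (i,a) * (Q ^\<^sub>m k) $$ (i,b))"
        using i pow_sym[OF Q Qsym] by (intro sum.cong refl) auto
      thus "(\<Sum>a<N. \<Sum>b<N. (Q ^\<^sub>m k) $$ (i,a) * (Q ^\<^sub>m k) $$ (b,i))
          = (\<Sum>a<N. (Q ^\<^sub>m k) $$ (i,a)) * (\<Sum>b<N. (Q ^\<^sub>m k) $$ (i,b))"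
        by (simp add: sum_product)
    qed
    also have "\<dots> = (\<Sum>i<N. \<rho> ^ k * \<rho> ^ k)"
      using rowsum_pow[OF Q Qrow] by (intro sum.cong refl) auto
    also have "\<dots> = real N * (\<rho>\<^sup>2) ^ k" by (simp add: power_mult_distrib[symmetric] power2_eq_square)
    finally show ?thesis by simp
  qed
  have sums_k: "(\<lambda>k. \<Sum>i<N. (Q ^\<^sub>m k * D * Q ^\<^sub>m k) $$ (i,i))
     sums (\<beta> * (\<Sum>i<N. g i / (1 - (mu i)\<^sup>2)) + sr\<^sup>2 * real N * (1 / (1 - \<rho>\<^sup>2)))"
  proof -
    have "(\<lambda>k. \<Sum>i<N. (mu i)\<^sup>2 ^ k * g i) sums (\<Sum>i<N. g i / (1 - (mu i)\<^sup>2))"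
    proof (rule sums_sum)
      fix i assume i: "i \<in> {..<N}"
      have "norm ((mu i)\<^sup>2) < 1" using mu1[of i] i by (simp add: abs_square_less_1)
      from sums_mult2[OF geometric_sums[OF this], of "g i"]
      show "(\<lambda>k. (mu i)\<^sup>2 ^ k * g i) sums (g i / (1 - (mu i)\<^sup>2))" by simp
    qed
    moreover have "norm (\<rho>\<^sup>2) < 1" using rho1 by (simp add: abs_square_less_1)
    ultimately show ?thesis unfolding trk
      by (intro sums_add sums_mult geometric_sums)
  qed
  have "(\<Sum>i<N. S i i) = (\<Sum>k. \<Sum>i<N. (Q ^\<^sub>m k * D * Q ^\<^sub>m k) $$ (i,i))"
    unfolding S_def by (rule suminf_sum[symmetric]) (use cl1 in auto)
  also have "\<dots> = \<beta> * (\<Sum>i<N. g i / (1 - (mu i)\<^sup>2)) + sr\<^sup>2 * real N * (1 / (1 - \<rho>\<^sup>2))"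
    using sums_k by (rule sums_unique[symmetric])
  finally have trS: "(\<Sum>i<N. S i i) = \<beta> * (\<Sum>i<N. g i / (1 - (mu i)\<^sup>2)) + sr\<^sup>2 * real N * (1 / (1 - \<rho>\<^sup>2))" .
  have "(\<Sum>i<N. S i i) / real N
        = sr\<^sup>2 / (1 - a\<^sup>2 * (1 - \<alpha>)\<^sup>2)
          + (\<Sum>i<N. a\<^sup>2 * \<alpha>\<^sup>2 * sw\<^sup>2 * g i / (1 - a\<^sup>2 * (lam i - \<alpha>)\<^sup>2)) / real N"
  proof -
    have "(\<Sum>i<N. a\<^sup>2 * \<alpha>\<^sup>2 * sw\<^sup>2 * g i / (1 - a\<^sup>2 * (lam i - \<alpha>)\<^sup>2)) = \<beta> * (\<Sum>i<N. g i / (1 - (mu i)\<^sup>2))"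
      by (simp add: sum_distrib_left \<beta>_def mu_def power_mult_distrib)
    moreover have "\<rho>\<^sup>2 = a\<^sup>2 * (1 - \<alpha>)\<^sup>2" by (simp add: \<rho>_def power_mult_distrib)
    ultimately show ?thesis using trS N0 by (simp add: field_simps)
  qed
  thus ?thesis using lim by blast
qed



lemma Qsum:
  fixes P :: "real mat"
  assumes P: "P \<in> carrier_mat N N" and i: "i < N"
  shows "(\<Sum>j<N. (a \<cdot>\<^sub>m (P - \<alpha> \<cdot>\<^sub>m 1\<^sub>m N)) $$ (i,j) * v j) = a * (\<Sum>j<N. P $$ (i,j) * v j) - a * \<alpha> * v i"
proof -
  have "(\<Sum>j<N. (a \<cdot>\<^sub>m (P - \<alpha> \<cdot>\<^sub>m 1\<^sub>m N)) $$ (i,j) * v j)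
      = (\<Sum>j<N. a * (P $$ (i,j) * v j) - (if j = i then a * \<alpha> * v i else 0))"
  proof (rule sum.cong[OF refl])
    fix j assume "j \<in> {..<N}"
    thus "(a \<cdot>\<^sub>m (P - \<alpha> \<cdot>\<^sub>m 1\<^sub>m N)) $$ (i,j) * v j = a * (P $$ (i,j) * v j) - (if j = i then a * \<alpha> * v i else 0)"
      using P i by (auto simp: algebra_simps)
  qed
  also have "\<dots> = a * (\<Sum>j<N. P $$ (i,j) * v j) - a * \<alpha> * v i"
    using i by (simp add: sum_subtractf sum_distrib_left)
  finally show ?thesis .
qed

lemma Psub:
  fixes P :: "real mat"
  assumes "(\<Sum>j<N. P $$ (i,j)) = 1"
  shows "(\<Sum>j<N. P $$ (i,j) * (u j - x)) = (\<Sum>j<N. P $$ (i,j) * u j) - x"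
  using assms by (simp add: right_diff_distrib sum_subtractf sum_distrib_right[symmetric])

lemma Padd:
  fixes P :: "real mat"
  assumes "(\<Sum>j<N. P $$ (i,j)) = 1"
  shows "(\<Sum>j<N. P $$ (i,j) * (x + u j)) = x + (\<Sum>j<N. P $$ (i,j) * u j)"
  using assms by (simp add: distrib_left sum.distrib sum_distrib_right[symmetric])

lemma onesum:
  assumes "i < N" shows "(\<Sum>l<N. (1\<^sub>m N :: real mat) $$ (i,l) * f l) = f i"
proof -
  have "(\<Sum>l<N. (1\<^sub>m N :: real mat) $$ (i,l) * f l) = (\<Sum>l<N. if l = i then f i else 0)"
    using assms by (intro sum.cong) auto
  thus ?thesis using assms by simp
qed

lemma x0_indep:
  fixes M :: "'w measure" and x0 :: "'w \<Rightarrow> real" and r :: "nat \<Rightarrow> 'w \<Rightarrow> real" and w :: "nat \<Rightarrow> nat \<Rightarrow> 'w \<Rightarrow> real"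
  assumes ps: "prob_space M"
    and H: "prob_space.indep_var M
           (Pi\<^sub>M (UNIV :: (nat + nat \<times> nat) set) (\<lambda>_. borel)) (\<lambda>\<omega> _. x0 \<omega>)
           (Pi\<^sub>M (UNIV :: (nat + nat \<times> nat) set) (\<lambda>_. borel))
           (\<lambda>\<omega> k. case k of Inl t \<Rightarrow> r t \<omega>
                            | Inr (i, t) \<Rightarrow> (if i < N then w i t \<omega> else 0))"
  shows "prob_space.indep_var M borel x0 borel (r t)"
    "j < N \<Longrightarrow> prob_space.indep_var M borel x0 borel (w j t)"
proof -
  interpret prob_space M by fact
  have m: "(\<lambda>f. f k) \<in> Pi\<^sub>M (UNIV :: (nat + nat \<times> nat) set) (\<lambda>_. borel) \<rightarrow>\<^sub>M (borel :: real measure)" for k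
    using measurable_component_singleton[of k UNIV "\<lambda>_. borel"] by simp
  note c1 = indep_var_compose[OF H m[of "Inl 0"] m[of "Inl t"]]
  show "indep_var borel x0 borel (r t)" using c1 by (simp add: o_def)
  assume j: "j < N"
  note c2 = indep_var_compose[OF H m[of "Inl 0"] m[of "Inr (j,t)"]]
  show "indep_var borel x0 borel (w j t)" using c2 j by (simp add: o_def)
qed

theorem theorem1:
  fixes M :: "'w measure" and N :: nat and a \<alpha> \<sigma>r \<sigma>w :: real
    and P :: "real mat" and lam :: "nat \<Rightarrow> real"
    and x0 :: "'w \<Rightarrow> real" and r :: "nat \<Rightarrow> 'w \<Rightarrow> real" and w :: "nat \<Rightarrow> nat \<Rightarrow> 'w \<Rightarrow> real"
    and xh0 xt0 :: "nat \<Rightarrow> real"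
  assumes "prob_space M"
    and "N \<ge> 2"
    and "0 < \<alpha>" "\<alpha> \<le> 1"
    and "sym_doubly_stochastic N P"
    and "eigenvalues_desc N P lam"
    and "lam 0 = 1" "lam 1 < 1" "-1 < lam (N - 1)"
    and "spectral_radius (map_mat complex_of_real (a \<cdot>\<^sub>m (P - \<alpha> \<cdot>\<^sub>m 1\<^sub>m N))) < 1"
    \<comment> \<open>initial state: finite second moment, independent of all innovations and noises\<close>
    and "x0 \<in> borel_measurable M"
    and "integrable M (\<lambda>\<omega>. (x0 \<omega>)\<^sup>2)"
    and "prob_space.indep_var M
           (Pi\<^sub>M (UNIV :: (nat + nat \<times> nat) set) (\<lambda>_. borel)) (\<lambda>\<omega> _. x0 \<omega>)
           (Pi\<^sub>M (UNIV :: (nat + nat \<times> nat) set) (\<lambda>_. borel))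
           (\<lambda>\<omega> k. case k of Inl t \<Rightarrow> r t \<omega>
                            | Inr (i, t) \<Rightarrow> (if i < N then w i t \<omega> else 0))"
    \<comment> \<open>innovations: zero mean, variance sigma_r^2, independent over time\<close>
    and "\<And>t. r t \<in> borel_measurable M"
    and "\<And>t. integrable M (\<lambda>\<omega>. (r t \<omega>)\<^sup>2)"
    and "\<And>t. prob_space.expectation M (r t) = 0"
    and "\<And>t. prob_space.expectation M (\<lambda>\<omega>. (r t \<omega>)\<^sup>2) = \<sigma>r\<^sup>2"
    and "prob_space.indep_vars M (\<lambda>_. borel) r UNIV"
    \<comment> \<open>observation noises: zero mean, variance sigma_w^2, independent over time and agents\<close>
    and "\<And>i t. i < N \<Longrightarrow> w i t \<in> borel_measurable M"
    and "\<And>i t. i < N \<Longrightarrow> integrable M (\<lambda>\<omega>. (w i t \<omega>)\<^sup>2)"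
    and "\<And>i t. i < N \<Longrightarrow> prob_space.expectation M (w i t) = 0"
    and "\<And>i t. i < N \<Longrightarrow> prob_space.expectation M (\<lambda>\<omega>. (w i t \<omega>)\<^sup>2) = \<sigma>w\<^sup>2"
    and "prob_space.indep_vars M (\<lambda>_. borel) (\<lambda>(i, t). w i t) ({..<N} \<times> UNIV)"
    \<comment> \<open>noises uncorrelated with innovations\<close>
    and "\<And>i t s. i < N \<Longrightarrow> prob_space.expectation M (\<lambda>\<omega>. w i t \<omega> * r s \<omega>) = 0"
  shows
    "let x = state a x0 r; y = obs a x0 r w;
         xh = est_hat N P a \<alpha> y xh0; xt = est_tilde N P a \<alpha> y xt0;
         R = \<sigma>r\<^sup>2 / (1 - a\<^sup>2 * (1 - \<alpha>)\<^sup>2)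
     in (\<exists>\<Sigma>h :: nat \<Rightarrow> nat \<Rightarrow> real.
           (\<forall>i<N. \<forall>j<N. (\<lambda>t. prob_space.expectation M
               (\<lambda>\<omega>. (xh t i \<omega> - x t \<omega>) * (xh t j \<omega> - x t \<omega>))) \<longlonglongrightarrow> \<Sigma>h i j)
         \<and> (\<Sum>i<N. \<Sigma>h i i) / real N
             = R + (\<Sum>i<N. a\<^sup>2 * \<alpha>\<^sup>2 * \<sigma>w\<^sup>2 / (1 - a\<^sup>2 * (lam i - \<alpha>)\<^sup>2)) / real N)
      \<and> (\<exists>\<Sigma>t :: nat \<Rightarrow> nat \<Rightarrow> real.
           (\<forall>i<N. \<forall>j<N. (\<lambda>t. prob_space.expectation M
               (\<lambda>\<omega>. (xt t i \<omega> - x t \<omega>) * (xt t j \<omega> - x t \<omega>))) \<longlonglongrightarrow> \<Sigma>t i j)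
         \<and> (\<Sum>i<N. \<Sigma>t i i) / real N
             = R + (\<Sum>i<N. a\<^sup>2 * \<alpha>\<^sup>2 * \<sigma>w\<^sup>2 * (lam i)\<^sup>2 / (1 - a\<^sup>2 * (lam i - \<alpha>)\<^sup>2)) / real N)"
proof -
  interpret prob_space M by (rule assms(1))
  have N0: "0 < N" using assms(2) by simp
  have x0int: "integrable M x0" by (rule sq_integrable[OF assms(1,11,12)])
  have rint: "integrable M (r t)" for t by (rule sq_integrable[OF assms(1) assms(14) assms(15)])
  have wint: "integrable M (w i t)" if "i < N" for i t
    by (rule sq_integrable[OF assms(1) assms(19)[OF that] assms(20)[OF that]])
  have x0r: "expectation (\<lambda>\<omega>. x0 \<omega> * r t \<omega>) = 0" for t
    using indep_var_lebesgue_integral[OF x0_indep(1)[OF assms(1,13)] x0int rint] assms(16) by simp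
  have x0w: "expectation (\<lambda>\<omega>. x0 \<omega> * w j t \<omega>) = 0" if "j < N" for j t
    using indep_var_lebesgue_integral[OF x0_indep(2)[OF assms(1,13) that] x0int wint[OF that]] assms(21)[OF that]
    by simp
  have rind: "expectation (\<lambda>\<omega>. r s \<omega> * r t \<omega>) = 0" if "s \<noteq> t" for s t
    using indep_var_lebesgue_integral[OF indep_pair_from_vars[OF assms(1,18), of s t] rint rint] that assms(16)
    by simp
  have wind: "expectation (\<lambda>\<omega>. w i s \<omega> * w j t \<omega>) = 0"
    if "i < N" "j < N" "(i, s) \<noteq> (j, t)" for i j s t
  proof -
    have "indep_var borel ((\<lambda>(i, t). w i t) (i,s)) borel ((\<lambda>(i, t). w i t) (j,t))"
      by (rule indep_pair_from_vars[OF assms(1,23)]) (use that in auto)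
    hence "indep_var borel (w i s) borel (w j t)" by simp
    from indep_var_lebesgue_integral[OF this wint wint] that assms(21) show ?thesis by simp
  qed
  have mdl: "model M N x0 r w \<sigma>r \<sigma>w"
    by (rule model.intro[OF assms(1)], rule model_axioms.intro)
       (use assms(11,12,14,15,16,17,19,20,21,22,24) x0r x0w rind wind in auto)
  have P: "P \<in> carrier_mat N N" and PT: "transpose_mat P = P"
    and Prow: "\<And>i. i < N \<Longrightarrow> (\<Sum>j<N. P $$ (i, j)) = 1"
    using assms(5) unfolding sym_doubly_stochastic_def by auto
  have Psym: "P $$ (i,j) = P $$ (j,i)" if "i < N" "j < N" for i j
  proof -
    have "transpose_mat P $$ (i,j) = P $$ (j,i)" using P that by simp
    thus ?thesis using PT by simp
  qed
  have cp: "char_poly P = (\<Prod>i<N. [:- lam i, 1:])" using assms(6) by (simp add: eigenvalues_desc_def)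
  note sf = spectral_facts[OF P cp assms(10)]
  define x where "x = state a x0 r"
  define y where "y = obs a x0 r w"
  define xh where "xh = est_hat N P a \<alpha> y xh0"
  define xt where "xt = est_tilde N P a \<alpha> y xt0"
  have yv: "y j t \<omega> = x t \<omega> + w j t \<omega>" for j t \<omega> by (simp add: y_def x_def obs_def)
  have xs: "x (Suc t) \<omega> = a * x t \<omega> + r t \<omega>" for t \<omega> by (simp add: x_def)
  have hat: "\<exists>\<Sigma> :: nat \<Rightarrow> nat \<Rightarrow> real.
           (\<forall>i<N. \<forall>j<N. (\<lambda>t. expectation (\<lambda>\<omega>. (xh t i \<omega> - x t \<omega>) * (xh t j \<omega> - x t \<omega>))) \<longlonglongrightarrow> \<Sigma> i j)
         \<and> (\<Sum>i<N. \<Sigma> i i) / real N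
             = \<sigma>r\<^sup>2 / (1 - a\<^sup>2 * (1 - \<alpha>)\<^sup>2)
               + (\<Sum>i<N. a\<^sup>2 * \<alpha>\<^sup>2 * \<sigma>w\<^sup>2 * 1 / (1 - a\<^sup>2 * (lam i - \<alpha>)\<^sup>2)) / real N"
  proof (rule generic[where e="\<lambda>t i \<omega>. xh t i \<omega> - x t \<omega>" and K="1\<^sub>m N" and Mz="1\<^sub>m N" and g="\<lambda>_. 1" and cinit=xh0,
        OF mdl N0 P Psym Prow cp assms(7) assms(10)])
    show "1\<^sub>m N \<in> carrier_mat N N" by simp
    show "(\<Sum>l<N. (1\<^sub>m N :: real mat) $$ (i,l) * (1\<^sub>m N :: real mat) $$ (j,l)) = (1\<^sub>m N :: real mat) $$ (i,j)"
      if "i < N" "j < N" for i j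
      using onesum[OF that(1), of "\<lambda>l. (1\<^sub>m N :: real mat) $$ (j,l)"] that by auto
    show "trc N ((a \<cdot>\<^sub>m (P - \<alpha> \<cdot>\<^sub>m 1\<^sub>m N)) ^\<^sub>m k * (a \<cdot>\<^sub>m (P - \<alpha> \<cdot>\<^sub>m 1\<^sub>m N)) ^\<^sub>m k * 1\<^sub>m N)
                = (\<Sum>i<N. (a * (lam i - \<alpha>)) ^ (2*k) * 1)" for k
    proof -
      have "(a \<cdot>\<^sub>m (P - \<alpha> \<cdot>\<^sub>m 1\<^sub>m N)) ^\<^sub>m k * (a \<cdot>\<^sub>m (P - \<alpha> \<cdot>\<^sub>m 1\<^sub>m N)) ^\<^sub>m k \<in> carrier_mat N N"
        using P by (simp add: minus_carrier_mat mult_car)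
      thus ?thesis using sf(2)[of k] by simp
    qed
    show "(\<lambda>\<omega>. xh 0 i \<omega> - x 0 \<omega>) = (\<lambda>\<omega>. xh0 i - x0 \<omega>)" for i by (simp add: xh_def x_def)
    show "(\<lambda>\<omega>. xh (Suc t) i \<omega> - x (Suc t) \<omega>) = (\<lambda>\<omega>. (\<Sum>j<N. (a \<cdot>\<^sub>m (P - \<alpha> \<cdot>\<^sub>m 1\<^sub>m N)) $$ (i,j) * (xh t j \<omega> - x t \<omega>))
               + (a * \<alpha>) * (\<Sum>l<N. (1\<^sub>m N :: real mat) $$ (i,l) * w l t \<omega>) - r t \<omega>)" if i: "i < N" for t i
    proof (rule ext)
      fix \<omega>
      have "(\<Sum>j<N. (a \<cdot>\<^sub>m (P - \<alpha> \<cdot>\<^sub>m 1\<^sub>m N)) $$ (i,j) * (xh t j \<omega> - x t \<omega>))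
          = a * (\<Sum>j<N. P $$ (i,j) * (xh t j \<omega> - x t \<omega>)) - a * \<alpha> * (xh t i \<omega> - x t \<omega>)"
        by (rule Qsum[OF P i])
      also have "(\<Sum>j<N. P $$ (i,j) * (xh t j \<omega> - x t \<omega>)) = (\<Sum>j<N. P $$ (i,j) * xh t j \<omega>) - x t \<omega>"
        by (rule Psub[OF Prow[OF i]])
      finally have e1: "(\<Sum>j<N. (a \<cdot>\<^sub>m (P - \<alpha> \<cdot>\<^sub>m 1\<^sub>m N)) $$ (i,j) * (xh t j \<omega> - x t \<omega>))
          = a * ((\<Sum>j<N. P $$ (i,j) * xh t j \<omega>) - x t \<omega>) - a * \<alpha> * (xh t i \<omega> - x t \<omega>)" .
      have e2: "(\<Sum>l<N. (1\<^sub>m N :: real mat) $$ (i,l) * w l t \<omega>) = w i t \<omega>" by (rule onesum[OF i])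
      have e3: "xh (Suc t) i \<omega> = a * ((\<Sum>j<N. P $$ (i,j) * xh t j \<omega>) + \<alpha> * (y i t \<omega> - xh t i \<omega>))"
        by (simp add: xh_def)
      show "xh (Suc t) i \<omega> - x (Suc t) \<omega> = (\<Sum>j<N. (a \<cdot>\<^sub>m (P - \<alpha> \<cdot>\<^sub>m 1\<^sub>m N)) $$ (i,j) * (xh t j \<omega> - x t \<omega>))
               + (a * \<alpha>) * (\<Sum>l<N. (1\<^sub>m N :: real mat) $$ (i,l) * w l t \<omega>) - r t \<omega>"
        unfolding e1 e2 e3 xs yv by (simp add: algebra_simps)
    qed
  qed
  have tilde: "\<exists>\<Sigma> :: nat \<Rightarrow> nat \<Rightarrow> real.
           (\<forall>i<N. \<forall>j<N. (\<lambda>t. expectation (\<lambda>\<omega>. (xt t i \<omega> - x t \<omega>) * (xt t j \<omega> - x t \<omega>))) \<longlonglongrightarrow> \<Sigma> i j)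
         \<and> (\<Sum>i<N. \<Sigma> i i) / real N
             = \<sigma>r\<^sup>2 / (1 - a\<^sup>2 * (1 - \<alpha>)\<^sup>2)
               + (\<Sum>i<N. a\<^sup>2 * \<alpha>\<^sup>2 * \<sigma>w\<^sup>2 * (lam i)\<^sup>2 / (1 - a\<^sup>2 * (lam i - \<alpha>)\<^sup>2)) / real N"
  proof (rule generic[where e="\<lambda>t i \<omega>. xt t i \<omega> - x t \<omega>" and K="P" and Mz="P * P" and g="\<lambda>i. (lam i)\<^sup>2" and cinit=xt0,
        OF mdl N0 P Psym Prow cp assms(7) assms(10)])
    show "P * P \<in> carrier_mat N N" using P by (simp add: mult_car)
    show "(\<Sum>l<N. P $$ (i,l) * P $$ (j,l)) = (P * P) $$ (i,j)" if "i < N" "j < N" for i j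
      using P that Psym by (auto simp: scalar_prod_def lessThan_atLeast0 intro!: sum.cong)
    show "trc N ((a \<cdot>\<^sub>m (P - \<alpha> \<cdot>\<^sub>m 1\<^sub>m N)) ^\<^sub>m k * (a \<cdot>\<^sub>m (P - \<alpha> \<cdot>\<^sub>m 1\<^sub>m N)) ^\<^sub>m k * (P * P))
                = (\<Sum>i<N. (a * (lam i - \<alpha>)) ^ (2*k) * (lam i)\<^sup>2)" for k
      by (rule sf(3))
    show "(\<lambda>\<omega>. xt 0 i \<omega> - x 0 \<omega>) = (\<lambda>\<omega>. xt0 i - x0 \<omega>)" for i by (simp add: xt_def x_def)
    show "(\<lambda>\<omega>. xt (Suc t) i \<omega> - x (Suc t) \<omega>) = (\<lambda>\<omega>. (\<Sum>j<N. (a \<cdot>\<^sub>m (P - \<alpha> \<cdot>\<^sub>m 1\<^sub>m N)) $$ (i,j) * (xt t j \<omega> - x t \<omega>))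
               + (a * \<alpha>) * (\<Sum>l<N. P $$ (i,l) * w l t \<omega>) - r t \<omega>)" if i: "i < N" for t i
    proof (rule ext)
      fix \<omega>
      have "(\<Sum>j<N. (a \<cdot>\<^sub>m (P - \<alpha> \<cdot>\<^sub>m 1\<^sub>m N)) $$ (i,j) * (xt t j \<omega> - x t \<omega>))
          = a * (\<Sum>j<N. P $$ (i,j) * (xt t j \<omega> - x t \<omega>)) - a * \<alpha> * (xt t i \<omega> - x t \<omega>)"
        by (rule Qsum[OF P i])
      also have "(\<Sum>j<N. P $$ (i,j) * (xt t j \<omega> - x t \<omega>)) = (\<Sum>j<N. P $$ (i,j) * xt t j \<omega>) - x t \<omega>"
        by (rule Psub[OF Prow[OF i]])
      finally have e1: "(\<Sum>j<N. (a \<cdot>\<^sub>m (P - \<alpha> \<cdot>\<^sub>m 1\<^sub>m N)) $$ (i,j) * (xt t j \<omega> - x t \<omega>))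
          = a * ((\<Sum>j<N. P $$ (i,j) * xt t j \<omega>) - x t \<omega>) - a * \<alpha> * (xt t i \<omega> - x t \<omega>)" .
      have e2: "(\<Sum>j<N. P $$ (i,j) * y j t \<omega>) = x t \<omega> + (\<Sum>j<N. P $$ (i,j) * w j t \<omega>)"
        unfolding yv by (rule Padd[OF Prow[OF i]])
      have e3: "xt (Suc t) i \<omega> = a * ((\<Sum>j<N. P $$ (i,j) * xt t j \<omega>) + \<alpha> * ((\<Sum>j<N. P $$ (i,j) * y j t \<omega>) - xt t i \<omega>))"
        by (simp add: xt_def)
      show "xt (Suc t) i \<omega> - x (Suc t) \<omega> = (\<Sum>j<N. (a \<cdot>\<^sub>m (P - \<alpha> \<cdot>\<^sub>m 1\<^sub>m N)) $$ (i,j) * (xt t j \<omega> - x t \<omega>))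
               + (a * \<alpha>) * (\<Sum>l<N. P $$ (i,l) * w l t \<omega>) - r t \<omega>"
        unfolding e1 e3 e2 xs by (simp add: algebra_simps)
    qed
  qed
  show ?thesis
    unfolding Let_def x_def[symmetric] y_def[symmetric] xh_def[symmetric] xt_def[symmetric]
    using hat tilde by simp
qed


end
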